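(* Assume the standing hypotheses (H), (L) and (g) below, and let $m_0,m_1>0$ be constants such that the following holds: for all $u_1,u_2\in W^{1,1}(0,T;X)$, all $x_0^i\in X$ with $x_0^i\in Z(g(0,u_i(0),u_i(0)-x_0^i))$ and all $\eta_i\in\Omega_{x_0^i}(u_i)$ ($i=1,2$), the solutions $\xi_i$ of the (non-state-dependent) sweeping process with inputs $(u_i,w_i)$, $w_i(t):=g(t,u_i(t),\eta_i(t))$, and initial conditions $x_0^i$, with $x_i=u_i-\xi_i$, satisfy for a.e. $t\in(0,T)$ $$|\dot\xi_1-\dot\xi_2|+\frac1c\frac{\mathrm d}{\mathrm dt}|G(x_1,w_1)-G(x_2,w_2)|\le m_1|\dot u_1-\dot u_2|+\delta|\dot\eta_1-\dot\eta_2|+m_0(a+b+|\dot u_1|)\big(|u_1-u_2|+|\xi_1-\xi_2|+|\eta_1-\eta_2|\big)$$ (all functions evaluated at $t$). Then for every $R>2m_0\int_0^T(a(t)+b(t))\,\mathrm{d}t$ there exists $K(R)>0$ such that whenever $u_1,u_2\in W^{1,1}(0,T;X)$ satisfy $\int_0^T|\dot u_1(t)|\,\mathrm{d}t\le\frac{R}{2m_0}-\int_0^T(a(t)+b(t))\,\mathrm{d}t$ and $x_0^i\in X$ satisfy $x_0^i\in Z(g(0,u_i(0),u_i(0)-x_0^i))$ for $i=1,2$, the solutions $\xi_i\in\Omega_{x_0^i}(u_i)$ of the state-dependent sweeping process with inputs $u_i$ and initial conditions $x_0^i$ satisfy $$\int_0^T|\dot\xi_1(t)-\dot\xi_2(t)|\,\mathrm{d}t\le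 K(R)\Big(|x_0^1-x_0^2|+|u_1(0)-u_2(0)|+\int_0^T|\dot u_1(t)-\dot u_2(t)|\,\mathrm{d}t\Big).$$
   Context: $T>0$. $X$ is a real Hilbert space with inner product $\langle\cdot,\cdot\rangle$ and norm $|x|=\sqrt{\langle x,x\rangle}$; $W$ is a real Banach space with norm $|\cdot|_W$, dual $W'$ (norm $|\cdot|_{W'}$), duality pairing $\langle v,f\rangle_W$; $\mathcal L(X,W)$ bounded linear operators with operator norm. $G:X\times W\to[0,\infty)$ is locally Lipschitz and $Z(w):=\{x\in X: G(x,w)\le 1\}$; $\partial Z(w)$ its boundary, $\mathrm{dist}(x,S)=\inf_{s\in S}|x-s|$. Partial gradients: $\nabla_xG(x,w)\in X$ with $\langle\nabla_xG(x,w),y\rangle=\lim_{t\to0}\frac1t(G(x+ty,w)-G(x,w))$; $\nabla_wG(x,w)\in W'$ with $\langle v,\nabla_wG(x,w)\rangle_W=\lim_{t\to0}\frac1t(G(x,w+tv)-G(x,w))$. (H): $\nabla_xG(x,w)$ exists for all $(x,w)$; there are positive constants $\lambda,c,L$ and functions $\mu_1:W\times[0,\infty)\to[0,\infty)$, $\mu_2:[0,\infty)\to[0,\infty)$ with $\mu_1(w,0)=\mu_2(0)=0$, $\lim_{s\to\infty}\mu_1(w,s)=\lim_{s\to\infty}\mu_2(s)=\infty$ for every $w$, such that for all $x,y,z\in X$, $w,w'\in W$: (i) $G(x,w)=1\Rightarrow|\nabla_xG(x,w)|\ge c$; (ii) $|\nabla_xG(x,w)-\nabla_xG(y,w)|\le\mu_1(w,|x-y|)$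 if $x,y\in Z(w)$; (iii) $\langle\nabla_xG(x,w)-\nabla_xG(z,w),x-z\rangle\ge-\lambda|x-z|^2$ if $x\in\partial Z(w)$, $z\in Z(w)$; (iv) $|G(x,w)-G(x,w')|\le L|w-w'|_W$; (v) for $\rho>0$, $\mathrm{dist}(x,Z(w))\ge\rho\Rightarrow G(x,w)-1\ge\mu_2(\rho)$. Set $r:=c/\lambda$. (L): $\nabla_xG,\nabla_wG$ exist on $X\times W$; positive constants $K_0,K_1,C_0,C_1$ with $|\nabla_xG|\le K_0$, $|\nabla_wG|_{W'}\le K_1$, $|\nabla_xG(x,w)-\nabla_xG(x',w')|\le C_0(|x-x'|+|w-w'|_W)$, $|\nabla_wG(x,w)-\nabla_wG(x',w')|_{W'}\le C_1(|x-x'|+|w-w'|_W)$. (g): $g:[0,T]\times X\times X\to W$ continuous with partial derivatives $\partial_tg,\partial_ug,\partial_\xi g$ and $a,b\in L^1(0,T)$, constants $\gamma,\omega,C_\xi,C_u>0$ such that for all $u,v,\xi,\eta\in X$, a.e. $t$: $|\partial_\xi g|_{\mathcal L(X,W)}\le\gamma$, $|\partial_ug|_{\mathcal L(X,W)}\le\omega$, $|\partial_tg|_W\le a(t)$, $|\partial_\xi g(t,u,\xi)-\partial_\xi g(t,v,\eta)|_{\mathcal L(X,W)}\le C_\xi(|u-v|+|\xi-\eta|)$, $|\partial_ug(t,u,\xi)-\partial_ug(t,v,\eta)|_{\mathcal L(X,W)}\le C_u(|u-v|+|\xi-\eta|)$, $|\partial_tg(t,u,\xi)-\partial_tg(t,v,\eta)|_W\le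 b(t)(|u-v|+|\xi-\eta|)$; and $\delta:=K_1\gamma/c<1$. Sweeping process with inputs $(u,w)\in W^{1,1}(0,T;X)\times W^{1,1}(0,T;W)$, initial condition $x_0\in Z(w(0))$: $\xi\in W^{1,1}(0,T;X)$ with $x:=u-\xi$, $x(t)\in Z(w(t))$ for all $t$, $\langle x(t)-z,\dot\xi(t)\rangle+\frac{|\dot\xi(t)|}{2r}|x(t)-z|^2\ge0$ for all $z\in Z(w(t))$ a.e. $t$, $x(0)=x_0$ (unique under (H)). State-dependent sweeping process with input $u$ and initial condition $x_0$ (where $x_0\in Z(g(0,u(0),u(0)-x_0))$): the same with $w(t)$ replaced by $g(t,u(t),\xi(t))$. $\Omega_{x_0}(u)$: set of $\eta\in W^{1,1}(0,T;X)$ with $\eta(0)=u(0)-x_0$ and $|\dot\eta(t)|\le\frac1{1-\delta}((1+\frac{\omega K_1}{c})|\dot u(t)|+\frac{K_1}{c}a(t))$ a.e.; the state-dependent problem has a unique solution in $\Omega_{x_0}(u)$. *)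

theory Defs
  imports "HOL-Analysis.Analysis"
begin

text \<open>Hilbert space X: type class real_inner + banach (complete); Banach space W: class banach.\<close>

definition ae_on :: "real set \<Rightarrow> (real \<Rightarrow> bool) \<Rightarrow> bool" where
  "ae_on S P \<longleftrightarrow> (\<exists>N. negligible N \<and> (\<forall>t\<in>S - N. P t))"

definition W11 :: "real \<Rightarrow> (real \<Rightarrow> 'a::banach) \<Rightarrow> (real \<Rightarrow> 'a) \<Rightarrow> bool" where
  "W11 T f f' \<longleftrightarrow>
     f' integrable_on {0..T} \<and> (\<lambda>t. norm (f' t)) integrable_on {0..T} \<and>
     (\<forall>t\<in>{0..T}. f t = f 0 + integral {0..t} f') \<and>
     ae_on {0..T} (\<lambda>t. (f has_vector_derivative f' t) (at t))"

definition Zset :: "('x \<Rightarrow> 'w \<Rightarrow> real) \<Rightarrow> 'w \<Rightarrow> 'x set" where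
  "Zset G w = {x. G x w \<le> 1}"

definition sweep_sol ::
  "('x::{real_inner,banach} \<Rightarrow> 'w \<Rightarrow> real) \<Rightarrow> real \<Rightarrow> real \<Rightarrow> (real \<Rightarrow> 'x) \<Rightarrow> (real \<Rightarrow> 'w)
    \<Rightarrow> 'x \<Rightarrow> (real \<Rightarrow> 'x) \<Rightarrow> (real \<Rightarrow> 'x) \<Rightarrow> bool" where
  "sweep_sol G r T u w x0 xi xi' \<longleftrightarrow>
     W11 T xi xi' \<and>
     (\<forall>t\<in>{0..T}. u t - xi t \<in> Zset G (w t)) \<and>
     ae_on {0..T} (\<lambda>t. \<forall>z\<in>Zset G (w t).
        inner (u t - xi t - z) (xi' t) + norm (xi' t) / (2 * r) * (norm (u t - xi t - z))\<^sup>2 \<ge> 0) \<and>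
     u 0 - xi 0 = x0"

definition in_Omega ::
  "real \<Rightarrow> real \<Rightarrow> real \<Rightarrow> real \<Rightarrow> real \<Rightarrow> (real \<Rightarrow> real) \<Rightarrow> (real \<Rightarrow> 'x::{real_inner,banach})
    \<Rightarrow> (real \<Rightarrow> 'x) \<Rightarrow> 'x \<Rightarrow> (real \<Rightarrow> 'x) \<Rightarrow> (real \<Rightarrow> 'x) \<Rightarrow> bool" where
  "in_Omega T \<delta> \<omega> K1 c a u u' x0 eta eta' \<longleftrightarrow>
     W11 T eta eta' \<and> eta 0 = u 0 - x0 \<and>
     ae_on {0..T} (\<lambda>t. norm (eta' t) \<le>
        1 / (1 - \<delta>) * ((1 + \<omega> * K1 / c) * norm (u' t) + K1 / c * a t))"

definition hyp_H ::
  "('x::{real_inner,banach} \<Rightarrow> 'w::banach \<Rightarrow> real) \<Rightarrow> ('x \<Rightarrow> 'w \<Rightarrow> 'x) \<Rightarrow> real \<Rightarrow> real \<Rightarrow> real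
    \<Rightarrow> ('w \<Rightarrow> real \<Rightarrow> real) \<Rightarrow> (real \<Rightarrow> real) \<Rightarrow> bool" where
  "hyp_H G Gx lam c L \<mu>1 \<mu>2 \<longleftrightarrow>
     (\<forall>x w. G x w \<ge> 0) \<and>
     (\<forall>x w. \<exists>e>0. \<exists>K. \<forall>x1 w1 x2 w2.
         norm (x1 - x) < e \<and> norm (w1 - w) < e \<and> norm (x2 - x) < e \<and> norm (w2 - w) < e \<longrightarrow>
         \<bar>G x1 w1 - G x2 w2\<bar> \<le> K * (norm (x1 - x2) + norm (w1 - w2))) \<and>
     (\<forall>x w y. ((\<lambda>s. G (x + s *\<^sub>R y) w) has_real_derivative inner (Gx x w) y) (at 0)) \<and>
     lam > 0 \<and> c > 0 \<and> L > 0 \<and>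
     (\<forall>w. \<mu>1 w 0 = 0 \<and> (\<forall>s\<ge>0. \<mu>1 w s \<ge> 0) \<and> filterlim (\<mu>1 w) at_top at_top) \<and>
     \<mu>2 0 = 0 \<and> (\<forall>s\<ge>0. \<mu>2 s \<ge> 0) \<and> filterlim \<mu>2 at_top at_top \<and>
     (\<forall>x w. G x w = 1 \<longrightarrow> norm (Gx x w) \<ge> c) \<and>
     (\<forall>x y w. x \<in> Zset G w \<and> y \<in> Zset G w \<longrightarrow> norm (Gx x w - Gx y w) \<le> \<mu>1 w (norm (x - y))) \<and>
     (\<forall>x z w. x \<in> frontier (Zset G w) \<and> z \<in> Zset G w \<longrightarrow>
         inner (Gx x w - Gx z w) (x - z) \<ge> - lam * (norm (x - z))\<^sup>2) \<and>
     (\<forall>x w w'. \<bar>G x w - G x w'\<bar> \<le> L * norm (w - w')) \<and>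
     (\<forall>x w \<rho>. \<rho> > 0 \<and> infdist x (Zset G w) \<ge> \<rho> \<longrightarrow> G x w - 1 \<ge> \<mu>2 \<rho>)"

definition hyp_L ::
  "('x::{real_inner,banach} \<Rightarrow> 'w::banach \<Rightarrow> real) \<Rightarrow> ('x \<Rightarrow> 'w \<Rightarrow> 'x) \<Rightarrow> ('x \<Rightarrow> 'w \<Rightarrow> 'w \<Rightarrow> real)
    \<Rightarrow> real \<Rightarrow> real \<Rightarrow> real \<Rightarrow> real \<Rightarrow> bool" where
  "hyp_L G Gx Gw K0 K1 C0 C1 \<longleftrightarrow>
     (\<forall>x w. bounded_linear (Gw x w)) \<and>
     (\<forall>x w v. ((\<lambda>s. G x (w + s *\<^sub>R v)) has_real_derivative Gw x w v) (at 0)) \<and>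
     K0 > 0 \<and> K1 > 0 \<and> C0 > 0 \<and> C1 > 0 \<and>
     (\<forall>x w. norm (Gx x w) \<le> K0) \<and>
     (\<forall>x w. onorm (Gw x w) \<le> K1) \<and>
     (\<forall>x w x' w'. norm (Gx x w - Gx x' w') \<le> C0 * (norm (x - x') + norm (w - w'))) \<and>
     (\<forall>x w x' w'. onorm (\<lambda>v. Gw x w v - Gw x' w' v) \<le> C1 * (norm (x - x') + norm (w - w')))"

text \<open>Hypothesis (g) (without the condition delta < 1, stated separately).\<close>
definition hyp_g ::
  "real \<Rightarrow> (real \<Rightarrow> 'x::{real_inner,banach} \<Rightarrow> 'x \<Rightarrow> 'w::banach) \<Rightarrow> (real \<Rightarrow> 'x \<Rightarrow> 'x \<Rightarrow> 'w)
    \<Rightarrow> (real \<Rightarrow> 'x \<Rightarrow> 'x \<Rightarrow> 'x \<Rightarrow> 'w) \<Rightarrow> (real \<Rightarrow> 'x \<Rightarrow> 'x \<Rightarrow> 'x \<Rightarrow> 'w)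
    \<Rightarrow> (real \<Rightarrow> real) \<Rightarrow> (real \<Rightarrow> real) \<Rightarrow> real \<Rightarrow> real \<Rightarrow> real \<Rightarrow> real \<Rightarrow> bool" where
  "hyp_g T g gt gu gxi a b \<gamma> \<omega> Cxi Cu \<longleftrightarrow>
     continuous_on ({0..T} \<times> UNIV \<times> UNIV) (\<lambda>(t, u, xi). g t u xi) \<and>
     (\<forall>t\<in>{0..T}. \<forall>u xi. ((\<lambda>s. g s u xi) has_vector_derivative gt t u xi) (at t within {0..T})) \<and>
     (\<forall>t\<in>{0..T}. \<forall>u xi. ((\<lambda>v. g t v xi) has_derivative gu t u xi) (at u)) \<and>
     (\<forall>t\<in>{0..T}. \<forall>u xi. ((\<lambda>eta. g t u eta) has_derivative gxi t u xi) (at xi)) \<and>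
     a absolutely_integrable_on {0..T} \<and> b absolutely_integrable_on {0..T} \<and>
     \<gamma> > 0 \<and> \<omega> > 0 \<and> Cxi > 0 \<and> Cu > 0 \<and>
     (\<forall>u v xi eta. ae_on {0..T} (\<lambda>t.
        onorm (gxi t u xi) \<le> \<gamma> \<and>
        onorm (gu t u xi) \<le> \<omega> \<and>
        norm (gt t u xi) \<le> a t \<and>
        onorm (\<lambda>h. gxi t u xi h - gxi t v eta h) \<le> Cxi * (norm (u - v) + norm (xi - eta)) \<and>
        onorm (\<lambda>h. gu t u xi h - gu t v eta h) \<le> Cu * (norm (u - v) + norm (xi - eta)) \<and>
        norm (gt t u xi - gt t v eta) \<le> b t * (norm (u - v) + norm (xi - eta))))"

end

theory Submission
  imports Defs
begin

lemma ftc_ae_ctrl: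
  fixes \<phi> f h :: "real \<Rightarrow> real"
  assumes st: "s \<le> t" and hint: "h integrable_on {s..t}"
    and N: "negligible N"
    and der: "\<And>x. x \<in> {s..t} - N \<Longrightarrow> (\<phi> has_real_derivative f x) (at x within {s..t})"
    and ctrl: "\<And>u v. s \<le> u \<Longrightarrow> u \<le> v \<Longrightarrow> v \<le> t \<Longrightarrow> \<bar>\<phi> v - \<phi> u\<bar> \<le> integral {u..v} h"
  shows "((\<lambda>x. if x \<in> N then 0 else f x) has_integral (\<phi> t - \<phi> s)) {s..t}"
  unfolding has_integral_real
proof safe
  fix e :: real assume e: "e > 0"
  define \<epsilon> where "\<epsilon> = e / (4 * (t - s + 1))"
  have \<epsilon>: "\<epsilon> > 0" using e st by (simp add: \<epsilon>_def)
  define g where "g = (\<lambda>x. if x \<in> N then \<bar>h x\<bar> else 0)"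
  have g0: "(g has_integral 0) K" for K
  proof -
    have "((\<lambda>x. 0::real) has_integral 0) K" by simp
    then show ?thesis
      by (rule has_integral_spike[OF N, rotated]) (auto simp: g_def)
  qed
  have gi: "g integrable_on cbox s t" using g0 by blast
  have hi: "h integrable_on cbox s t" using hint by simp
  obtain \<gamma>1 where \<gamma>1: "gauge \<gamma>1"
    "\<And>p. \<lbrakk>p tagged_partial_division_of (cbox s t); \<gamma>1 fine p\<rbrakk> \<Longrightarrow>
             sum (\<lambda>(x,k). norm(Henstock_Kurzweil_Integration.content k *\<^sub>R h x - integral k h)) p < \<epsilon>"
    by (rule Henstock_lemma[OF hi \<epsilon>]) blast
  obtain \<gamma>2 where \<gamma>2: "gauge \<gamma>2"
    "\<And>p. \<lbrakk>p tagged_partial_division_of (cbox s t); \<gamma>2 fine p\<rbrakk> \<Longrightarrow>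
             sum (\<lambda>(x,k). norm(Henstock_Kurzweil_Integration.content k *\<^sub>R g x - integral k g)) p < \<epsilon>"
    by (rule Henstock_lemma[OF gi \<epsilon>]) blast
  have "\<exists>d>0. x \<in> {s..t} - N \<longrightarrow>
         (\<forall>y\<in>{s..t}. norm (y-x) < d \<longrightarrow> norm (\<phi> y - \<phi> x - (y-x) *\<^sub>R f x) \<le> \<epsilon> * norm (y-x))" for x
  proof (cases "x \<in> {s..t} - N")
    case True
    then have "(\<phi> has_derivative (\<lambda>y. y *\<^sub>R f x)) (at x within {s..t})"
      using der[OF True] by (simp add: has_real_derivative_iff_has_vector_derivative has_vector_derivative_def)
    then obtain d where "d > 0" "\<forall>y\<in>{s..t}. norm (y-x) < d \<longrightarrow> norm (\<phi> y - \<phi> x - (y-x) *\<^sub>R f x) \<le> \<epsilon> * norm (y-x)"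
      unfolding has_derivative_within_alt using \<epsilon> by blast
    then show ?thesis by blast
  next
    case False
    then show ?thesis by (intro exI[of _ 1]) auto
  qed
  then obtain d where d: "\<And>x. 0 < d x"
      "\<And>x y. \<lbrakk>x \<in> {s..t} - N; y \<in> {s..t}; norm (y-x) < d x\<rbrakk>
               \<Longrightarrow> norm (\<phi> y - \<phi> x - (y-x) *\<^sub>R f x) \<le> \<epsilon> * norm (y-x)"
    by (metis (no_types, lifting))
  show "\<exists>\<gamma>. gauge \<gamma> \<and> (\<forall>\<D>. \<D> tagged_division_of {s..t} \<and> \<gamma> fine \<D> \<longrightarrow>
        norm ((\<Sum>(x, k)\<in>\<D>. Henstock_Kurzweil_Integration.content k *\<^sub>R (if x \<in> N then 0 else f x)) - (\<phi> t - \<phi> s)) < e)"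
  proof (intro exI conjI allI impI; (elim conjE)?)
    show "gauge (\<lambda>x. ball x (d x) \<inter> \<gamma>1 x \<inter> \<gamma>2 x)"
      using d(1) \<gamma>1(1) \<gamma>2(1) by (intro gauge_Int gauge_ball_dependent) auto
  next
    fix p assume ptag: "p tagged_division_of {s..t}" and fine: "(\<lambda>x. ball x (d x) \<inter> \<gamma>1 x \<inter> \<gamma>2 x) fine p"
    have finp: "finite p" using ptag by blast
    define p1 where "p1 = {(x,K)\<in>p. x \<notin> N}"
    define p2 where "p2 = {(x,K)\<in>p. x \<in> N}"
    have p12: "p = p1 \<union> p2" "p1 \<inter> p2 = {}" by (auto simp: p1_def p2_def)
    have fin12: "finite p1" "finite p2" unfolding p1_def p2_def by (rule rev_finite_subset[OF finp], force)+
    have part: "p2 tagged_partial_division_of cbox s t"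
      using ptag tagged_division_of_def tagged_partial_division_subset by (metis box_real(2) p12(1) sup_ge2)
    have fine1: "\<gamma>1 fine p2" and fine2: "\<gamma>2 fine p2"
      by (rule fineI, use fineD[OF fine] in \<open>force simp: p2_def\<close>)+
    have eqphi: "\<phi> t - \<phi> s = (\<Sum>(x,K)\<in>p. \<phi>(Sup K) - \<phi>(Inf K))"
      using additive_tagged_division_1[OF st ptag, of \<phi>] by simp
    have eqts: "t - s = (\<Sum>(x,K)\<in>p. Sup K - Inf K)"
      using additive_tagged_division_1[OF st ptag, of "\<lambda>x. x"] by simp
    have Kform: "\<exists>u v. K = {u..v} \<and> u \<le> v \<and> x \<in> K \<and> K \<subseteq> {s..t}" if xKp: "(x,K) \<in> p" for x K
    proof -
      have xK: "x \<in> K" and Ks: "K \<subseteq> {s..t}" using tagged_division_ofD(2,3)[OF ptag xKp] by auto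
      obtain u v where "K = cbox u v" using tagged_division_ofD(4)[OF ptag xKp] by blast
      then show ?thesis using xK Ks by auto
    qed
    define F where "F = (\<lambda>(x,K). Henstock_Kurzweil_Integration.content K *\<^sub>R (if x \<in> N then 0 else f x) - (\<phi>(Sup K) - \<phi>(Inf K)))"
    have "(\<Sum>(x, k)\<in>p. Henstock_Kurzweil_Integration.content k *\<^sub>R (if x \<in> N then 0 else f x)) - (\<phi> t - \<phi> s) = sum F p"
      unfolding eqphi F_def by (simp add: split_def sum_subtractf)
    also have "\<dots> = sum F p1 + sum F p2"
      using p12 fin12 by (simp add: sum.union_disjoint)
    finally have eq: "(\<Sum>(x, k)\<in>p. Henstock_Kurzweil_Integration.content k *\<^sub>R (if x \<in> N then 0 else f x)) - (\<phi> t - \<phi> s) = sum F p1 + sum F p2" .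
    have b1: "norm (sum F p1) \<le> \<epsilon> * (t - s)"
    proof -
      have "norm (sum F p1) \<le> (\<Sum>(x,K)\<in>p1. \<epsilon> * (Sup K - Inf K))"
      proof (rule sum_norm_le, clarify)
        fix x K assume xK: "(x,K) \<in> p1"
        then have xKp: "(x,K) \<in> p" and xN: "x \<notin> N" by (auto simp: p1_def)
        obtain u v where K: "K = {u..v}" "u \<le> v" "x \<in> K" "K \<subseteq> {s..t}" using Kform[OF xKp] by blast
        have ball: "\<forall>y\<in>K. y \<in> ball x (d x)" using fineD[OF fine xKp] by blast
        have xin: "x \<in> {s..t} - N" using K xN by auto
        have uK: "u \<in> K" "v \<in> K" using K by auto
        have "norm (Henstock_Kurzweil_Integration.content K *\<^sub>R f x - (\<phi> v - \<phi> u)) = norm (\<phi> u - \<phi> x - (u - x) *\<^sub>R f x - (\<phi> v - \<phi> x - (v - x) *\<^sub>R f x))"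
          using K by (auto simp: algebra_simps)
        also have "\<dots> \<le> norm (\<phi> u - \<phi> x - (u - x) *\<^sub>R f x) + norm (\<phi> v - \<phi> x - (v - x) *\<^sub>R f x)"
          by (rule norm_triangle_ineq4)
        also have "\<dots> \<le> \<epsilon> * norm (u - x) + \<epsilon> * norm (v - x)"
        proof -
          have du: "norm (u - x) < d x" "norm (v - x) < d x"
            using bspec[OF ball uK(1)] bspec[OF ball uK(2)] by (auto simp: dist_real_def)
          show ?thesis
            by (rule add_mono; rule d(2)[OF xin]) (use du uK K in auto)
        qed
        also have "\<dots> = \<epsilon> * (v - u)" using K by (auto simp: algebra_simps)
        finally show "norm (F (x,K)) \<le> \<epsilon> * (Sup K - Inf K)"
          using K xN by (simp add: F_def)
      qed
      also have "\<dots> \<le> (\<Sum>(x,K)\<in>p. \<epsilon> * (Sup K - Inf K))"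
      proof (rule sum_mono2[OF finp])
        show "p1 \<subseteq> p" by (auto simp: p1_def)
        show "0 \<le> (case b of (x, K) \<Rightarrow> \<epsilon> * (Sup K - Inf K))" if bp: "b \<in> p - p1" for b
        proof -
          obtain x K where b: "b = (x,K)" by force
          have "(x,K) \<in> p" using bp b by auto
          then obtain u v where "K = {u..v}" "u \<le> v" using Kform by blast
          then show ?thesis using \<epsilon> b by auto
        qed
      qed
      also have "\<dots> = \<epsilon> * (t - s)" unfolding eqts by (simp add: sum_distrib_left split_def)
      finally show ?thesis .
    qed
    have b2: "norm (sum F p2) \<le> 2 * \<epsilon>"
    proof -
      have "norm (sum F p2) \<le> (\<Sum>(x,K)\<in>p2. norm (Henstock_Kurzweil_Integration.content K *\<^sub>R h x - integral K h) + norm (Henstock_Kurzweil_Integration.content K *\<^sub>R g x - integral K g))"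
      proof (rule sum_norm_le, clarify)
        fix x K assume xK: "(x,K) \<in> p2"
        then have xKp: "(x,K) \<in> p" and xN: "x \<in> N" by (auto simp: p2_def)
        obtain u v where K: "K = {u..v}" "u \<le> v" "x \<in> K" "K \<subseteq> {s..t}" using Kform[OF xKp] by blast
        have ig: "integral K g = 0" using g0 by blast
        have "norm (F (x,K)) = \<bar>\<phi> v - \<phi> u\<bar>" using K xN by (simp add: F_def)
        also have "\<dots> \<le> integral K h" using ctrl[of u v] K by auto
        also have "\<dots> \<le> norm (Henstock_Kurzweil_Integration.content K *\<^sub>R h x - integral K h) + Henstock_Kurzweil_Integration.content K * \<bar>h x\<bar>"
        proof -
          have c0: "Henstock_Kurzweil_Integration.content K \<ge> 0" by simp
          have "Henstock_Kurzweil_Integration.content K * h x \<le> Henstock_Kurzweil_Integration.content K * \<bar>h x\<bar>"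
            using c0 by (intro mult_left_mono) auto
          then show ?thesis by (simp add: abs_minus_commute)
        qed
        also have "\<dots> = norm (Henstock_Kurzweil_Integration.content K *\<^sub>R h x - integral K h) + norm (Henstock_Kurzweil_Integration.content K *\<^sub>R g x - integral K g)"
          using xN ig by (simp add: g_def abs_mult)
        finally show "norm (F (x,K)) \<le> norm (Henstock_Kurzweil_Integration.content K *\<^sub>R h x - integral K h) + norm (Henstock_Kurzweil_Integration.content K *\<^sub>R g x - integral K g)" .
      qed
      also have "\<dots> = (\<Sum>(x,K)\<in>p2. norm (Henstock_Kurzweil_Integration.content K *\<^sub>R h x - integral K h)) + (\<Sum>(x,K)\<in>p2. norm (Henstock_Kurzweil_Integration.content K *\<^sub>R g x - integral K g))"
        by (simp add: split_def sum.distrib)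
      also have "\<dots> \<le> \<epsilon> + \<epsilon>"
        using \<gamma>1(2)[OF part fine1] \<gamma>2(2)[OF part fine2] by linarith
      finally show ?thesis by simp
    qed
    have "norm (sum F p1 + sum F p2) \<le> \<epsilon> * (t - s) + 2 * \<epsilon>"
      using b1 b2 norm_triangle_ineq[of "sum F p1" "sum F p2"] by linarith
    also have "\<dots> < e"
    proof -
      have "\<epsilon> * (t - s) + 2 * \<epsilon> \<le> \<epsilon> * (4 * (t - s + 1)) / 2"
        using st \<epsilon> by (simp add: algebra_simps)
      also have "\<epsilon> * (4 * (t - s + 1)) = e" using st by (simp add: \<epsilon>_def)
      finally show ?thesis using e by linarith
    qed
    finally show "norm ((\<Sum>(x, k)\<in>p. Henstock_Kurzweil_Integration.content k *\<^sub>R (if x \<in> N then 0 else f x)) - (\<phi> t - \<phi> s)) < e"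
      using eq by simp
  qed
qed

lemma ae_on_AE: "ae_on S P \<longleftrightarrow> (AE t in lborel. t \<in> S \<longrightarrow> P t)"
proof -
  have "ae_on S P \<longleftrightarrow> (AE t in lebesgue. t \<in> S \<longrightarrow> P t)"
    unfolding ae_on_def eventually_ae_filter negligible_iff_null_sets
  proof safe
    fix N assume "N \<in> null_sets lebesgue" "\<forall>t\<in>S - N. P t"
    then show "\<exists>N\<in>null_sets lebesgue. {x \<in> space lebesgue. \<not> (x \<in> S \<longrightarrow> P x)} \<subseteq> N"
      by (intro bexI[of _ N]) auto
  next
    fix N assume "N \<in> null_sets lebesgue" "{x \<in> space lebesgue. \<not> (x \<in> S \<longrightarrow> P x)} \<subseteq> N"
    then show "\<exists>N. N \<in> null_sets lebesgue \<and> (\<forall>t\<in>S - N. P t)"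
      by (intro exI[of _ N]) auto
  qed
  also have "\<dots> \<longleftrightarrow> (AE t in lborel. t \<in> S \<longrightarrow> P t)"
    by (rule AE_completion_iff)
  finally show ?thesis .
qed

lemma seq_quotient_tendsto:
  fixes k :: "real \<Rightarrow> 'b::real_normed_vector"
  assumes "(k has_vector_derivative k') (at s)"
  shows "(\<lambda>n. real (Suc n) *\<^sub>R (k (s + 1 / real (Suc n)) - k s)) \<longlonglongrightarrow> k'"
proof -
  define h where "h = (\<lambda>n::nat. 1 / real (Suc n))"
  have hpos: "h n > 0" for n by (simp add: h_def)
  have h0: "h \<longlonglongrightarrow> 0" unfolding h_def by (rule LIMSEQ_Suc[OF lim_const_over_n]) 
  have hat: "filterlim h (at 0) sequentially"
    unfolding filterlim_at using h0 hpos by (auto intro: always_eventually simp: less_imp_neq[symmetric])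
  have "(\<lambda>u. norm (k (s + u) - k s - u *\<^sub>R k') / norm u) \<midarrow>0\<rightarrow> 0"
    using assms unfolding has_vector_derivative_def has_derivative_at by blast
  then have L: "(\<lambda>n. norm (k (s + h n) - k s - h n *\<^sub>R k') / norm (h n)) \<longlonglongrightarrow> 0"
    by (rule filterlim_compose[OF _ hat])
  have eq: "norm (real (Suc n) *\<^sub>R (k (s + 1 / real (Suc n)) - k s) - k') = norm (k (s + h n) - k s - h n *\<^sub>R k') / norm (h n)" for n
  proof -
    have "real (Suc n) *\<^sub>R (k (s + 1 / real (Suc n)) - k s) - k' = (1 / h n) *\<^sub>R (k (s + h n) - k s - h n *\<^sub>R k')"
      using hpos[of n] by (simp add: h_def algebra_simps)
    then show ?thesis using hpos[of n] by (simp add: divide_simps)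
  qed
  have "(\<lambda>n. norm (real (Suc n) *\<^sub>R (k (s + 1 / real (Suc n)) - k s) - k')) \<longlonglongrightarrow> 0"
    unfolding eq by (rule L)
  then show ?thesis
    by (simp add: LIM_zero_cancel tendsto_norm_zero_iff)
qed

lemma negligible_not_interval:
  fixes T :: real
  assumes "0 < T" "negligible N" "t \<in> {0..T}" "r > 0"
  shows "\<exists>t'\<in>{0..T} - N. dist t' t < r"
proof (rule ccontr)
  assume H: "\<not> (\<exists>t'\<in>{0..T} - N. dist t' t < r)"
  define a where "a = max 0 (t - r/2)"
  define b where "b = min T (t + r/2)"
  have ab: "a < b" using assms by (auto simp: a_def b_def)
  have "{a..b} \<subseteq> N"
  proof
    fix y assume "y \<in> {a..b}"
    then have "y \<in> {0..T}" "dist y t < r" using assms by (auto simp: a_def b_def dist_real_def)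
    then show "y \<in> N" using H by blast
  qed
  then have "negligible {a..b}" using assms(2) negligible_subset by blast
  moreover have "box a b \<noteq> {}" using ab by simp
  ultimately show False using negligible_interval(1)[of a b] by simp
qed

lemma lip_ae:
  fixes f :: "real \<Rightarrow> 'a::real_normed_vector \<Rightarrow> 'b::banach" and f' :: "real \<Rightarrow> 'a \<Rightarrow> 'a \<Rightarrow> 'b"
  assumes T: "0 < T" and cont: "continuous_on ({0..T} \<times> UNIV) (\<lambda>(t,x). f t x)"
    and der: "\<And>t x. t \<in> {0..T} \<Longrightarrow> (f t has_derivative f' t x) (at x)"
    and bd: "\<And>x. ae_on {0..T} (\<lambda>t. onorm (f' t x) \<le> M)"
    and t: "t \<in> {0..T}"
  shows "norm (f t y - f t x) \<le> M * norm (y - x)"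
proof -
  define d where "d = y - x"
  define c where "c = M * norm d"
  have M0: "M \<ge> 0"
  proof -
    obtain N where N: "negligible N" "\<forall>t\<in>{0..T} - N. onorm (f' t x) \<le> M"
      using bd[of x] unfolding ae_on_def by blast
    obtain t' where t': "t' \<in> {0..T} - N" using negligible_not_interval[OF T N(1), of 0 1] T by auto
    have "bounded_linear (f' t' x)" using der[of t' x] t' has_derivative_bounded_linear by blast
    then have "onorm (f' t' x) \<ge> 0" by (rule onorm_pos_le)
    moreover have "onorm (f' t' x) \<le> M" using N(2) t' by blast
    ultimately show ?thesis by linarith
  qed
  define cl where "cl = (\<lambda>t::real. max 0 (min T t))"
  have cl_in: "cl t \<in> {0..T}" for t using T by (auto simp: cl_def)
  have cl_id: "t \<in> {0..T} \<Longrightarrow> cl t = t" for t by (auto simp: cl_def)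
  have ccl: "continuous_on UNIV cl" unfolding cl_def by (intro continuous_intros)
  define H where "H = (\<lambda>z::real\<times>real. f (cl (snd z)) (x + fst z *\<^sub>R d))"
  have contH: "continuous_on UNIV H"
  proof -
    have "continuous_on UNIV ((\<lambda>(t,x). f t x) \<circ> (\<lambda>z::real\<times>real. (cl (snd z), x + fst z *\<^sub>R d)))"
      by (rule continuous_on_compose[OF _ continuous_on_subset[OF cont]])
         (use cl_in in \<open>auto intro!: continuous_intros continuous_on_compose2[OF ccl]\<close>)
    then show ?thesis by (simp add: H_def o_def)
  qed
  define q where "q = (\<lambda>n z. if snd z \<in> {0..T} then norm (real (Suc n) *\<^sub>R (H (fst z + 1 / real (Suc n), snd z) - H z)) else 0)"
  define Qm where "Qm = (\<lambda>z::real\<times>real. if snd z \<in> {0..T} then norm (f' (snd z) (x + fst z *\<^sub>R d) d) else 0)"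
  have kder: "((\<lambda>s. f t (x + s *\<^sub>R d)) has_vector_derivative f' t (x + s *\<^sub>R d) d) (at s)" if "t \<in> {0..T}" for t s
  proof -
    have "((\<lambda>s. x + s *\<^sub>R d) has_derivative (\<lambda>r. r *\<^sub>R d)) (at s)"
      by (auto intro!: derivative_eq_intros)
    from diff_chain_at[OF this der[OF that]] 
    have "((\<lambda>s. f t (x + s *\<^sub>R d)) has_derivative (\<lambda>r. f' t (x + s *\<^sub>R d) (r *\<^sub>R d))) (at s)"
      by (simp add: o_def)
    moreover have "bounded_linear (f' t (x + s *\<^sub>R d))" using der[OF that] by (rule has_derivative_bounded_linear)
    ultimately show ?thesis
      unfolding has_vector_derivative_def by (simp add: linear_simps)
  qed
  have Qm_meas: "Qm \<in> borel_measurable borel"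
  proof (rule borel_measurable_LIMSEQ_metric[of q])
    fix n
    have c1: "(\<lambda>z. norm (real (Suc n) *\<^sub>R (H (fst z + 1 / real (Suc n), snd z) - H z))) \<in> borel_measurable borel"
      by (rule borel_measurable_continuous_onI)
         (intro continuous_intros continuous_on_compose2[OF contH]; auto)
    have e: "{z::real\<times>real. snd z \<in> {0..T}} = UNIV \<times> {0..T}" by auto
    have "{z::real\<times>real. snd z \<in> {0..T}} \<in> sets borel" unfolding e by (intro borel_closed closed_Times) auto
    then show "q n \<in> borel_measurable borel"
      unfolding q_def by (intro measurable_If[OF c1]) auto
  next
    fix z :: "real \<times> real" assume "z \<in> space borel"
    show "(\<lambda>n. q n z) \<longlonglongrightarrow> Qm z"
    proof (cases "snd z \<in> {0..T}")
      case True
      have "(\<lambda>n. real (Suc n) *\<^sub>R ((\<lambda>s. f (snd z) (x + s *\<^sub>R d)) (fst z + 1 / real (Suc n)) - (\<lambda>s. f (snd z) (x + s *\<^sub>R d)) (fst z))) \<longlonglongrightarrow> f' (snd z) (x + fst z *\<^sub>R d) d"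
        by (rule seq_quotient_tendsto[OF kder[OF True]])
      then have "(\<lambda>n. norm (real (Suc n) *\<^sub>R ((\<lambda>s. f (snd z) (x + s *\<^sub>R d)) (fst z + 1 / real (Suc n)) - (\<lambda>s. f (snd z) (x + s *\<^sub>R d)) (fst z)))) \<longlonglongrightarrow> norm (f' (snd z) (x + fst z *\<^sub>R d) d)"
        by (rule tendsto_norm)
      then show ?thesis using True by (simp add: q_def Qm_def H_def cl_id prod.case_eq_if)
    next
      case False
      have "q n z = 0" for n using False unfolding q_def by auto
      moreover have "Qm z = 0" using False unfolding Qm_def by auto
      ultimately show ?thesis by simp
    qed
  qed
  define P where "P = (\<lambda>s t. s \<in> {0..1} \<longrightarrow> t \<in> {0..T} \<longrightarrow> Qm (s,t) \<le> c)"
  have Pmeas: "{z \<in> space (lborel \<Otimes>\<^sub>M lborel). P (fst z) (snd z)} \<in> sets (lborel \<Otimes>\<^sub>M (lborel::real measure))"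
  proof -
    have e: "{z::real\<times>real. fst z \<in> {0..1} \<longrightarrow> snd z \<in> {0..T} \<longrightarrow> Qm z \<le> c} = - ({0..1} \<times> {0..T}) \<union> {z \<in> space borel. Qm z \<le> c}"
      by auto
    have s1: "- ({0..1} \<times> {0..T}) \<in> sets (borel :: (real \<times> real) measure)"
      by (intro borel_open open_Compl closed_Times) auto
    have s2: "{z \<in> space borel. Qm z \<le> c} \<in> sets borel"
      using Qm_meas borel_measurable_iff_le by blast
    have "{z::real\<times>real. fst z \<in> {0..1} \<longrightarrow> snd z \<in> {0..T} \<longrightarrow> Qm z \<le> c} \<in> sets borel"
      unfolding e using s1 s2 by blast
    then show ?thesis unfolding lborel_prod by (simp add: P_def)
  qed
  have each: "AE t in lborel. P s t" for s
  proof -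
    have "ae_on {0..T} (\<lambda>t. onorm (f' t (x + s *\<^sub>R d)) \<le> M)" by (rule bd)
    moreover have "onorm (f' t (x + s *\<^sub>R d)) \<le> M \<Longrightarrow> t \<in> {0..T} \<Longrightarrow> norm (f' t (x + s *\<^sub>R d) d) \<le> c" for t
    proof -
      assume a: "onorm (f' t (x + s *\<^sub>R d)) \<le> M" and tT: "t \<in> {0..T}"
      have "bounded_linear (f' t (x + s *\<^sub>R d))" using der[OF tT] by (rule has_derivative_bounded_linear)
      then have "norm (f' t (x + s *\<^sub>R d) d) \<le> onorm (f' t (x + s *\<^sub>R d)) * norm d" by (rule onorm)
      also have "\<dots> \<le> M * norm d" using a by (intro mult_right_mono) auto
      finally show ?thesis by (simp add: c_def)
    qed
    ultimately have "ae_on {0..T} (\<lambda>t. norm (f' t (x + s *\<^sub>R d) d) \<le> c)"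
      unfolding ae_on_def by blast
    then show ?thesis unfolding ae_on_AE P_def Qm_def by (rule AE_mp) auto
  qed
  have sw: "AE t in lborel. AE s in lborel. P s t"
  proof -
    have PS: "pair_sigma_finite lborel (lborel :: real measure)"
      by (simp add: pair_sigma_finite_def lborel.sigma_finite_measure_axioms)
    have "AE s in lborel. AE t in lborel. P s t" by (rule AE_I2) (rule each)
    then show ?thesis using pair_sigma_finite.AE_commute[OF PS Pmeas] by blast
  qed
  have good: "norm (f t y - f t x) \<le> c" if tg: "AE s in lborel. P s t" and tT: "t \<in> {0..T}" for t
  proof -
    have "AE s in lborel. s \<in> {0..1} \<longrightarrow> norm (f' t (x + s *\<^sub>R d) d) \<le> c"
    proof -
      have t0: "0 \<le> t" "t \<le> T" using tT by auto
      show ?thesis using tg by eventually_elim (auto simp: P_def Qm_def t0)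
    qed
    then have "ae_on {0..1} (\<lambda>s. norm (f' t (x + s *\<^sub>R d) d) \<le> c)"
      unfolding ae_on_AE .
    then obtain N where N: "negligible N" "\<forall>s\<in>{0..1} - N. norm (f' t (x + s *\<^sub>R d) d) \<le> c"
      unfolding ae_on_def by blast
    have ftc: "((\<lambda>s. f' t (x + s *\<^sub>R d) d) has_integral (f t (x + 1 *\<^sub>R d) - f t (x + 0 *\<^sub>R d))) {0..1}"
      by (rule fundamental_theorem_of_calculus) (auto intro: has_vector_derivative_at_within kder[OF tT])
    have ftc': "((\<lambda>s. if s \<in> N then 0 else f' t (x + s *\<^sub>R d) d) has_integral (f t (x + 1 *\<^sub>R d) - f t (x + 0 *\<^sub>R d))) {0..1}"
      by (rule has_integral_spike[OF N(1) _ ftc]) auto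
    have "norm (f t (x + 1 *\<^sub>R d) - f t (x + 0 *\<^sub>R d)) \<le> c * Henstock_Kurzweil_Integration.content (cbox (0::real) 1)"
      by (rule has_integral_bound[of c _ _ 0 1]) (use ftc' N(2) M0 in \<open>auto simp: c_def\<close>)
    then show ?thesis by (simp add: d_def)
  qed
  obtain N where N: "negligible N" "\<forall>t\<in>{0..T} - N. norm (f t y - f t x) \<le> c"
  proof -
    have "AE t in lborel. t \<in> {0..T} \<longrightarrow> norm (f t y - f t x) \<le> c"
      using sw by eventually_elim (auto intro: good)
    then show ?thesis using that unfolding ae_on_AE[symmetric] ae_on_def by blast
  qed
  have contt: "continuous_on {0..T} (\<lambda>t. norm (f t y - f t x))"
  proof -
    have "continuous_on {0..T} ((\<lambda>(t,x). f t x) \<circ> (\<lambda>t. (t, y)))" "continuous_on {0..T} ((\<lambda>(t,x). f t x) \<circ> (\<lambda>t. (t, x)))"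
      by (rule continuous_on_compose[OF _ continuous_on_subset[OF cont]]; auto intro!: continuous_intros)+
    then show ?thesis by (auto simp: o_def intro!: continuous_intros)
  qed
  show ?thesis
  proof (rule ccontr)
    assume "\<not> ?thesis"
    then have gt: "norm (f t y - f t x) > c" by (simp add: c_def d_def)
    have "\<exists>r>0. \<forall>t'\<in>{0..T}. dist t' t < r \<longrightarrow> dist (norm (f t' y - f t' x)) (norm (f t y - f t x)) < norm (f t y - f t x) - c"
      using contt t gt unfolding continuous_on_iff by auto
    then obtain r where r: "r > 0" "\<And>t'. t' \<in> {0..T} \<Longrightarrow> dist t' t < r \<Longrightarrow> dist (norm (f t' y - f t' x)) (norm (f t y - f t x)) < norm (f t y - f t x) - c"
      by blast
    obtain t' where t': "t' \<in> {0..T} - N" "dist t' t < r" using negligible_not_interval[OF T N(1) t r(1)] by blast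
    have "norm (f t' y - f t' x) \<le> c" using N(2) t' by blast
    moreover have "dist (norm (f t' y - f t' x)) (norm (f t y - f t x)) < norm (f t y - f t x) - c" using r t' by blast
    ultimately show False by (simp add: dist_real_def)
  qed
qed

lemma ae_on_mono: "ae_on S P \<Longrightarrow> (\<And>t. t \<in> S \<Longrightarrow> P t \<Longrightarrow> Q t) \<Longrightarrow> ae_on S Q"
  unfolding ae_on_def by blast

lemma hyp_g_cont: "hyp_g T g gt gu gxi a b \<gamma> \<omega> Cxi Cu \<Longrightarrow> continuous_on ({0..T} \<times> UNIV \<times> UNIV) (\<lambda>(t, u, xi). g t u xi)"
  unfolding hyp_g_def by (elim conjE) assumption
lemma hyp_g_gt: "hyp_g T g gt gu gxi a b \<gamma> \<omega> Cxi Cu \<Longrightarrow> \<forall>t\<in>{0..T}. \<forall>u xi. ((\<lambda>s. g s u xi) has_vector_derivative gt t u xi) (at t within {0..T})"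
  unfolding hyp_g_def by (elim conjE) assumption
lemma hyp_g_gu: "hyp_g T g gt gu gxi a b \<gamma> \<omega> Cxi Cu \<Longrightarrow> \<forall>t\<in>{0..T}. \<forall>u xi. ((\<lambda>v. g t v xi) has_derivative gu t u xi) (at u)"
  unfolding hyp_g_def by (elim conjE) assumption
lemma hyp_g_gxi: "hyp_g T g gt gu gxi a b \<gamma> \<omega> Cxi Cu \<Longrightarrow> \<forall>t\<in>{0..T}. \<forall>u xi. ((\<lambda>eta. g t u eta) has_derivative gxi t u xi) (at xi)"
  unfolding hyp_g_def by (elim conjE) assumption
lemma hyp_g_a: "hyp_g T g gt gu gxi a b \<gamma> \<omega> Cxi Cu \<Longrightarrow> a absolutely_integrable_on {0..T}"
  unfolding hyp_g_def by (elim conjE) assumption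
lemma hyp_g_b: "hyp_g T g gt gu gxi a b \<gamma> \<omega> Cxi Cu \<Longrightarrow> b absolutely_integrable_on {0..T}"
  unfolding hyp_g_def by (elim conjE) assumption
lemma hyp_g_gam: "hyp_g T g gt gu gxi a b \<gamma> \<omega> Cxi Cu \<Longrightarrow> \<gamma> > 0"
  unfolding hyp_g_def by (elim conjE) assumption
lemma hyp_g_om: "hyp_g T g gt gu gxi a b \<gamma> \<omega> Cxi Cu \<Longrightarrow> \<omega> > 0"
  unfolding hyp_g_def by (elim conjE) assumption
lemma hyp_g_ae: "hyp_g T g gt gu gxi a b \<gamma> \<omega> Cxi Cu \<Longrightarrow> \<forall>u v xi eta. ae_on {0..T} (\<lambda>t.
        onorm (gxi t u xi) \<le> \<gamma> \<and>
        onorm (gu t u xi) \<le> \<omega> \<and>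
        norm (gt t u xi) \<le> a t \<and>
        onorm (\<lambda>h. gxi t u xi h - gxi t v eta h) \<le> Cxi * (norm (u - v) + norm (xi - eta)) \<and>
        onorm (\<lambda>h. gu t u xi h - gu t v eta h) \<le> Cu * (norm (u - v) + norm (xi - eta)) \<and>
        norm (gt t u xi - gt t v eta) \<le> b t * (norm (u - v) + norm (xi - eta)))"
  unfolding hyp_g_def by (elim conjE) assumption

lemma hyp_g_ae_single:
  assumes "hyp_g T g gt gu gxi a b \<gamma> \<omega> Cxi Cu"
  shows "ae_on {0..T} (\<lambda>t. onorm (gxi t p q) \<le> \<gamma> \<and> onorm (gu t p q) \<le> \<omega> \<and> norm (gt t p q) \<le> a t)"
proof -
  have "ae_on {0..T} (\<lambda>t.
        onorm (gxi t p q) \<le> \<gamma> \<and>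
        onorm (gu t p q) \<le> \<omega> \<and>
        norm (gt t p q) \<le> a t \<and>
        onorm (\<lambda>h. gxi t p q h - gxi t p q h) \<le> Cxi * (norm (p - p) + norm (q - q)) \<and>
        onorm (\<lambda>h. gu t p q h - gu t p q h) \<le> Cu * (norm (p - p) + norm (q - q)) \<and>
        norm (gt t p q - gt t p q) \<le> b t * (norm (p - p) + norm (q - q)))"
    using spec[where x=q, OF spec[where x=q, OF spec[where x=p, OF spec[where x=p, OF hyp_g_ae[OF assms]]]]] .
  then show ?thesis by (rule ae_on_mono) (elim conjE, intro conjI)
qed


lemma hyp_H_dx: "hyp_H G Gx lam c L \<mu>1 \<mu>2 \<Longrightarrow> \<forall>x w y. ((\<lambda>s. G (x + s *\<^sub>R y) w) has_real_derivative inner (Gx x w) y) (at 0)"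
  unfolding hyp_H_def by (elim conjE) assumption
lemma hyp_H_c: "hyp_H G Gx lam c L \<mu>1 \<mu>2 \<Longrightarrow> c > 0"
  unfolding hyp_H_def by (elim conjE) assumption
lemma hyp_H_L: "hyp_H G Gx lam c L \<mu>1 \<mu>2 \<Longrightarrow> L > 0"
  unfolding hyp_H_def by (elim conjE) assumption
lemma hyp_H_Lw: "hyp_H G Gx lam c L \<mu>1 \<mu>2 \<Longrightarrow> \<forall>x w w'. \<bar>G x w - G x w'\<bar> \<le> L * norm (w - w')"
  unfolding hyp_H_def by (elim conjE) assumption
lemma hyp_L_K0pos: "hyp_L G Gx Gw K0 K1 C0 C1 \<Longrightarrow> K0 > 0"
  unfolding hyp_L_def by (elim conjE) assumption
lemma hyp_L_K1pos: "hyp_L G Gx Gw K0 K1 C0 C1 \<Longrightarrow> K1 > 0"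
  unfolding hyp_L_def by (elim conjE) assumption
lemma hyp_L_K0: "hyp_L G Gx Gw K0 K1 C0 C1 \<Longrightarrow> \<forall>x w. norm (Gx x w) \<le> K0"
  unfolding hyp_L_def by (elim conjE) assumption

lemma W11_intg: "W11 T f f' \<Longrightarrow> f' integrable_on {0..T}"
  unfolding W11_def by (elim conjE) assumption
lemma W11_nintg: "W11 T f f' \<Longrightarrow> (\<lambda>t. norm (f' t)) integrable_on {0..T}"
  unfolding W11_def by (elim conjE) assumption
lemma W11_rep: "W11 T f f' \<Longrightarrow> \<forall>t\<in>{0..T}. f t = f 0 + integral {0..t} f'"
  unfolding W11_def by (elim conjE) assumption
lemma W11_ae: "W11 T f f' \<Longrightarrow> ae_on {0..T} (\<lambda>t. (f has_vector_derivative f' t) (at t))"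
  unfolding W11_def by (elim conjE) assumption

lemma G_lip_x:
  assumes H: "hyp_H G Gx lam c L \<mu>1 \<mu>2" and Lh: "hyp_L G Gx Gw K0 K1 C0 C1"
  shows "\<bar>G x w - G y w\<bar> \<le> K0 * norm (x - y)"
proof -
  have Hd: "\<And>x w y. ((\<lambda>s. G (x + s *\<^sub>R y) w) has_real_derivative inner (Gx x w) y) (at 0)"
    using hyp_H_dx[OF H] by blast
  have K0: "\<And>x w. norm (Gx x w) \<le> K0" using hyp_L_K0[OF Lh] by blast
  define d where "d = x - y"
  define p where "p = (\<lambda>s. G (y + s *\<^sub>R d) w)"
  have der: "DERIV p s :> inner (Gx (y + s *\<^sub>R d) w) d" for s
  proof -
    have e: "(\<lambda>r. p (r + s)) = (\<lambda>r. G ((y + s *\<^sub>R d) + r *\<^sub>R d) w)"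
      by (rule ext) (simp add: p_def algebra_simps scaleR_add_left)
    have "((\<lambda>r. p (r + s)) has_real_derivative inner (Gx (y + s *\<^sub>R d) w) d) (at 0)"
      unfolding e by (rule Hd)
    then show ?thesis using DERIV_shift[of p _ 0 s] by simp
  qed
  obtain z where z: "p 1 - p 0 = (1 - 0) * inner (Gx (y + z *\<^sub>R d) w) d"
    using MVT2[of 0 1 p "\<lambda>s. inner (Gx (y + s *\<^sub>R d) w) d"] der by auto
  have "\<bar>p 1 - p 0\<bar> \<le> norm (Gx (y + z *\<^sub>R d) w) * norm d"
    using z Cauchy_Schwarz_ineq2 by simp
  also have "\<dots> \<le> K0 * norm d" by (intro mult_right_mono K0) auto
  finally show ?thesis by (simp add: p_def d_def)
qed

lemma G_lip_w:
  assumes H: "hyp_H G Gx lam c L \<mu>1 \<mu>2"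
  shows "\<bar>G x w - G x w'\<bar> \<le> L * norm (w - w')"
  using hyp_H_Lw[OF H] by blast

lemma G_lip:
  assumes H: "hyp_H G Gx lam c L \<mu>1 \<mu>2" and Lh: "hyp_L G Gx Gw K0 K1 C0 C1"
  shows "\<bar>G x w - G x' w'\<bar> \<le> K0 * norm (x - x') + L * norm (w - w')"
  using G_lip_x[OF H Lh, of x w x'] G_lip_w[OF H, of x' w w'] by linarith

lemma g_time:
  assumes gh: "hyp_g T g gt gu gxi a b \<gamma> \<omega> Cxi Cu" and uv: "0 \<le> u" "u \<le> v" "v \<le> T"
  shows "norm (g v p q - g u p q) \<le> integral {u..v} a"
proof -
  have der: "\<And>t. t \<in> {0..T} \<Longrightarrow> ((\<lambda>s. g s p q) has_vector_derivative gt t p q) (at t within {0..T})"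
    using hyp_g_gt[OF gh] by blast
  have aint: "a integrable_on {0..T}"
    using hyp_g_a[OF gh] unfolding absolutely_integrable_on_def by blast
  have ae: "ae_on {0..T} (\<lambda>t. norm (gt t p q) \<le> a t)"
    by (rule ae_on_mono[OF hyp_g_ae_single[OF gh]]) blast
  then obtain N where N: "negligible N" "\<And>t. t \<in> {0..T} - N \<Longrightarrow> norm (gt t p q) \<le> a t"
    unfolding ae_on_def by blast
  have ftc: "((\<lambda>t. gt t p q) has_integral (g v p q - g u p q)) {u..v}"
    by (rule fundamental_theorem_of_calculus[OF uv(2)])
       (rule has_vector_derivative_within_subset[OF der], use uv in auto)
  have f0: "((\<lambda>t. if t \<in> N then 0 else gt t p q) has_integral (g v p q - g u p q)) {u..v}"
    by (rule has_integral_spike[OF N(1) _ ftc]) auto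
  have ai: "a integrable_on {u..v}" by (rule integrable_on_subinterval[OF aint]) (use uv in auto)
  have a0: "((\<lambda>t. if t \<in> N then 0 else a t) has_integral integral {u..v} a) {u..v}"
    by (rule has_integral_spike[OF N(1) _ integrable_integral[OF ai]]) auto
  have "norm (integral {u..v} (\<lambda>t. if t \<in> N then 0 else gt t p q)) \<le> integral {u..v} (\<lambda>t. if t \<in> N then 0 else a t)"
    by (rule integral_norm_bound_integral) (use f0 a0 N(2) uv in auto)
  then show ?thesis using f0 a0 by (simp add: integral_unique)
qed

lemma W11_int:
  assumes W: "W11 T f f'" and uv: "0 \<le> u" "u \<le> v" "v \<le> T"
  shows "f' integrable_on {u..v}" "(\<lambda>t. norm (f' t)) integrable_on {u..v}"
proof -
  have s: "{u..v} \<subseteq> {0..T}" using uv by auto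
  show "f' integrable_on {u..v}" by (rule integrable_on_subinterval[OF W11_intg[OF W] s])
  show "(\<lambda>t. norm (f' t)) integrable_on {u..v}" by (rule integrable_on_subinterval[OF W11_nintg[OF W] s])
qed

lemma W11_diff:
  assumes W: "W11 T f f'" and uv: "0 \<le> u" "u \<le> v" "v \<le> T"
  shows "f v - f u = integral {u..v} f'"
proof -
  have v: "v \<in> {0..T}" and u: "u \<in> {0..T}" using uv by auto
  have fv: "f v = f 0 + integral {0..v} f'" using W11_rep[OF W] v by blast
  have fu: "f u = f 0 + integral {0..u} f'" using W11_rep[OF W] u by blast
  have iv: "f' integrable_on {0..v}" by (rule W11_int(1)[OF W order_refl]) (use uv in auto)
  have "integral {0..u} f' + integral {u..v} f' = integral {0..v} f'"
    by (rule Henstock_Kurzweil_Integration.integral_combine[OF uv(1,2) iv])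
  then show ?thesis using fv fu by (simp add: algebra_simps)
qed

lemma W11_norm:
  assumes W: "W11 T f f'" and uv: "0 \<le> u" "u \<le> v" "v \<le> T"
  shows "norm (f v - f u) \<le> integral {u..v} (\<lambda>t. norm (f' t))"
  unfolding W11_diff[OF assms]
  by (rule integral_norm_bound_integral[OF W11_int[OF assms]]) simp

lemma W11_cont:
  assumes W: "W11 T f f'"
  shows "continuous_on {0..T} f"
proof -
  have "continuous_on {0..T} (\<lambda>t. f 0 + integral {0..t} f')"
    by (intro continuous_on_add continuous_on_const indefinite_integral_continuous_1 W11_intg[OF W])
  moreover have "\<And>x. x \<in> {0..T} \<Longrightarrow> f 0 + integral {0..x} f' = f x"
    using W11_rep[OF W] by (metis (no_types, lifting))
  ultimately show ?thesis by (rule continuous_on_eq)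
qed

lemma W11_diff_norm_int:
  assumes T: "0 < T" and Wf: "W11 T f f'" and Wg: "W11 T g g'"
  shows "(\<lambda>t. norm (f' t - g' t)) integrable_on {0..T}"
proof -
  define h where "h = (\<lambda>t. f t - g t)"
  obtain N1 where N1: "negligible N1" "\<And>t. t \<in> {0..T} - N1 \<Longrightarrow> (f has_vector_derivative f' t) (at t)"
    using W11_ae[OF Wf] unfolding ae_on_def by blast
  obtain N2 where N2: "negligible N2" "\<And>t. t \<in> {0..T} - N2 \<Longrightarrow> (g has_vector_derivative g' t) (at t)"
    using W11_ae[OF Wg] unfolding ae_on_def by blast
  define N where "N = N1 \<union> N2 \<union> {0, T}"
  have N: "negligible N" using N1 N2 by (simp add: N_def)
  define cl where "cl = (\<lambda>t::real. max 0 (min T t))"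
  have cl_in: "cl t \<in> {0..T}" for t using T by (auto simp: cl_def)
  have ccl: "continuous_on UNIV cl" unfolding cl_def by (intro continuous_intros)
  have ch: "continuous_on {0..T} h" unfolding h_def using W11_cont[OF Wf] W11_cont[OF Wg] by (intro continuous_intros)
  have cht: "continuous_on UNIV (h \<circ> cl)"
    by (rule continuous_on_compose[OF ccl continuous_on_subset[OF ch]]) (use cl_in in auto)
  define q where "q = (\<lambda>n t. norm (real (Suc n) *\<^sub>R ((h \<circ> cl) (t + 1 / real (Suc n)) - (h \<circ> cl) t)))"
  have qm: "q n measurable_on {0..T}" for n
  proof -
    have "continuous_on UNIV (q n)" unfolding q_def
      by (intro continuous_intros continuous_on_compose2[OF cht]) auto
    then have "q n measurable_on UNIV" by (rule continuous_imp_measurable_on)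
    then have "(\<lambda>x. if x \<in> {0..T} then q n x else 0) measurable_on UNIV"
      by (rule measurable_on_restrict) auto
    then show ?thesis by (simp only: measurable_on_UNIV)
  qed
  have lim: "(\<lambda>n. q n t) \<longlonglongrightarrow> norm (f' t - g' t)" if t: "t \<in> {0..T} - N" for t
  proof -
    have tt: "t \<in> {0<..<T}" using t unfolding N_def by auto
    have t1: "t \<in> {0..T} - N1" and t2: "t \<in> {0..T} - N2" using t unfolding N_def by blast+
    have "(h has_vector_derivative (f' t - g' t)) (at t)"
      unfolding h_def by (rule has_vector_derivative_diff[OF N1(2)[OF t1] N2(2)[OF t2]])
    moreover have "\<And>y. y \<in> {0<..<T} \<Longrightarrow> h y = (h \<circ> cl) y" unfolding cl_def by simp
    ultimately have "((h \<circ> cl) has_vector_derivative (f' t - g' t)) (at t)"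
      by (rule has_vector_derivative_transform_within_open[OF _ open_greaterThanLessThan tt])
    from tendsto_norm[OF seq_quotient_tendsto[OF this]] show ?thesis by (simp add: q_def)
  qed
  have m: "(\<lambda>t. norm (f' t - g' t)) measurable_on {0..T}"
    using measurable_on_limit[OF qm N lim] .
  show ?thesis
  proof (rule measurable_bounded_by_integrable_imp_integrable)
    show "(\<lambda>t. norm (f' t - g' t)) \<in> borel_measurable (lebesgue_on {0..T})"
      by (rule measurable_on_iff_borel_measurable[THEN iffD1, OF _ m]) simp
    show "(\<lambda>t. norm (f' t) + norm (g' t)) integrable_on {0..T}"
      by (intro integrable_add W11_nintg[OF Wf] W11_nintg[OF Wg])
    show "norm (norm (f' t - g' t)) \<le> norm (f' t) + norm (g' t)" for t
      by (simp add: norm_triangle_ineq4)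
  qed simp
qed

lemma g_lip:
  assumes T: "0 < T" and gh: "hyp_g T g gt gu gxi a b \<gamma> \<omega> Cxi Cu" and t: "t \<in> {0..T}"
  shows "norm (g t p' q' - g t p q) \<le> \<omega> * norm (p' - p) + \<gamma> * norm (q' - q)"
proof -
  have hc: "continuous_on ({0..T} \<times> UNIV \<times> UNIV) (\<lambda>(t, u, xi). g t u xi)" by (rule hyp_g_cont[OF gh])
  have c1: "continuous_on ({0..T} \<times> UNIV) (\<lambda>(t,x). g t x q')"
  proof -
    have "continuous_on ({0..T} \<times> UNIV) ((\<lambda>(t, u, xi). g t u xi) \<circ> (\<lambda>z. (fst z, snd z, q')))"
      by (rule continuous_on_compose[OF _ continuous_on_subset[OF hc]]) (auto intro!: continuous_intros)
    then show ?thesis by (simp add: o_def case_prod_beta)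
  qed
  have c2: "continuous_on ({0..T} \<times> UNIV) (\<lambda>(t,y). g t p y)"
  proof -
    have "continuous_on ({0..T} \<times> UNIV) ((\<lambda>(t, u, xi). g t u xi) \<circ> (\<lambda>z. (fst z, p, snd z)))"
      by (rule continuous_on_compose[OF _ continuous_on_subset[OF hc]]) (auto intro!: continuous_intros)
    then show ?thesis by (simp add: o_def case_prod_beta)
  qed
  have l1: "norm (g t p' q' - g t p q') \<le> \<omega> * norm (p' - p)"
  proof (rule lip_ae[OF T c1, of "\<lambda>t x. gu t x q'"])
    show "((\<lambda>x. g s x q') has_derivative gu s x q') (at x)" if "s \<in> {0..T}" for s x
      using hyp_g_gu[OF gh] that by blast
    show "ae_on {0..T} (\<lambda>t. onorm (gu t x q') \<le> \<omega>)" for x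
      by (rule ae_on_mono[OF hyp_g_ae_single[OF gh, of x q']]) blast
  qed (rule t)
  have l2: "norm (g t p q' - g t p q) \<le> \<gamma> * norm (q' - q)"
  proof (rule lip_ae[OF T c2, of "\<lambda>t y. gxi t p y"])
    show "((\<lambda>y. g s p y) has_derivative gxi s p y) (at y)" if "s \<in> {0..T}" for s y
      using hyp_g_gxi[OF gh] that by blast
    show "ae_on {0..T} (\<lambda>t. onorm (gxi t p y) \<le> \<gamma>)" for y
      by (rule ae_on_mono[OF hyp_g_ae_single[OF gh, of p y]]) blast
  qed (rule t)
  have "norm (g t p' q' - g t p q) \<le> norm (g t p' q' - g t p q') + norm (g t p q' - g t p q)"
    by (rule norm_diff_triangle_le[where y="g t p q'"]) simp_all
  then show ?thesis using l1 l2 by linarith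
qed

lemma W11_pair_norm:
  assumes T: "0 < T" and Wf: "W11 T f f'" and Wg: "W11 T g g'" and uv: "0 \<le> u" "u \<le> v" "v \<le> T"
  shows "norm ((f v - g v) - (f u - g u)) \<le> integral {u..v} (\<lambda>t. norm (f' t - g' t))"
proof -
  have i1: "(\<lambda>t. f' t - g' t) integrable_on {u..v}"
    by (intro integrable_diff W11_int(1)[OF Wf uv] W11_int(1)[OF Wg uv])
  have i2: "(\<lambda>t. norm (f' t - g' t)) integrable_on {u..v}"
    by (rule integrable_on_subinterval[OF W11_diff_norm_int[OF T Wf Wg]]) (use uv in auto)
  have eq: "(f v - g v) - (f u - g u) = integral {u..v} (\<lambda>t. f' t - g' t)"
    using W11_diff[OF Wf uv] W11_diff[OF Wg uv] integral_diff[OF W11_int(1)[OF Wf uv] W11_int(1)[OF Wg uv]]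
    by (simp add: algebra_simps)
  show ?thesis unfolding eq by (rule integral_norm_bound_integral[OF i1 i2]) simp
qed

lemma Psi_ctrl:
  assumes T: "0 < T" and H: "hyp_H G Gx lam c L \<mu>1 \<mu>2" and Lh: "hyp_L G Gx Gw K0 K1 C0 C1"
    and gh: "hyp_g T g gt gu gxi a b \<gamma> \<omega> Cxi Cu"
    and Wu: "W11 T uu uu'" and Wx: "W11 T xx xx'" and rs: "0 \<le> r" "r \<le> s" "s \<le> T"
  shows "\<bar>G (uu s - xx s) (g s (uu s) (xx s)) - G (uu r - xx r) (g r (uu r) (xx r))\<bar>
    \<le> integral {r..s} (\<lambda>t. (K0 + L * \<omega>) * norm (uu' t) + (K0 + L * \<gamma>) * norm (xx' t) + L * a t)"
proof -
  define Iu where "Iu = integral {r..s} (\<lambda>t. norm (uu' t))"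
  define Ix where "Ix = integral {r..s} (\<lambda>t. norm (xx' t))"
  define Ia where "Ia = integral {r..s} a"
  have K0: "K0 > 0" by (rule hyp_L_K0pos[OF Lh])
  have L: "L > 0" by (rule hyp_H_L[OF H])
  have om: "\<omega> > 0" by (rule hyp_g_om[OF gh])
  have gam: "\<gamma> > 0" by (rule hyp_g_gam[OF gh])
  have hu: "norm (uu s - uu r) \<le> Iu" unfolding Iu_def by (rule W11_norm[OF Wu rs])
  have hx: "norm (xx s - xx r) \<le> Ix" unfolding Ix_def by (rule W11_norm[OF Wx rs])
  have ha: "norm (g s (uu s) (xx s) - g r (uu s) (xx s)) \<le> Ia" unfolding Ia_def by (rule g_time[OF gh rs])
  have hl: "norm (g r (uu s) (xx s) - g r (uu r) (xx r)) \<le> \<omega> * norm (uu s - uu r) + \<gamma> * norm (xx s - xx r)"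
    by (rule g_lip[OF T gh]) (use rs in auto)
  have hl2: "\<omega> * norm (uu s - uu r) + \<gamma> * norm (xx s - xx r) \<le> \<omega> * Iu + \<gamma> * Ix"
    using hu hx om gam by (intro add_mono mult_left_mono) auto
  have hw: "norm (g s (uu s) (xx s) - g r (uu r) (xx r)) \<le> Ia + (\<omega> * Iu + \<gamma> * Ix)"
  proof -
    have "norm (g s (uu s) (xx s) - g r (uu r) (xx r)) \<le> norm (g s (uu s) (xx s) - g r (uu s) (xx s)) + norm (g r (uu s) (xx s) - g r (uu r) (xx r))"
      by (rule norm_diff_triangle_le[where y="g r (uu s) (xx s)"]) simp_all
    then show ?thesis using ha hl hl2 by linarith
  qed
  have hxx: "norm ((uu s - xx s) - (uu r - xx r)) \<le> Iu + Ix"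
  proof -
    have "norm ((uu s - xx s) - (uu r - xx r)) = norm ((uu s - uu r) - (xx s - xx r))" by (simp add: algebra_simps)
    also have "\<dots> \<le> norm (uu s - uu r) + norm (xx s - xx r)" by (rule norm_triangle_ineq4)
    finally show ?thesis using hu hx by linarith
  qed
  have "\<bar>G (uu s - xx s) (g s (uu s) (xx s)) - G (uu r - xx r) (g r (uu r) (xx r))\<bar>
      \<le> K0 * norm ((uu s - xx s) - (uu r - xx r)) + L * norm (g s (uu s) (xx s) - g r (uu r) (xx r))"
    by (rule G_lip[OF H Lh])
  also have "\<dots> \<le> K0 * (Iu + Ix) + L * (Ia + (\<omega> * Iu + \<gamma> * Ix))"
    using hxx hw K0 L by (intro add_mono mult_left_mono) auto
  also have "\<dots> = (K0 + L * \<omega>) * Iu + (K0 + L * \<gamma>) * Ix + L * Ia" by (simp add: algebra_simps)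
  also have "\<dots> = integral {r..s} (\<lambda>t. (K0 + L * \<omega>) * norm (uu' t) + (K0 + L * \<gamma>) * norm (xx' t) + L * a t)"
  proof -
    have a0: "a integrable_on {0..T}"
      using hyp_g_a[OF gh] unfolding absolutely_integrable_on_def by (elim conjE)
    have ai: "a integrable_on {r..s}" by (rule integrable_on_subinterval[OF a0]) (use rs in auto)
    have h1: "((\<lambda>t. norm (uu' t)) has_integral Iu) {r..s}" unfolding Iu_def by (rule integrable_integral[OF W11_int(2)[OF Wu rs]])
    have h2: "((\<lambda>t. norm (xx' t)) has_integral Ix) {r..s}" unfolding Ix_def by (rule integrable_integral[OF W11_int(2)[OF Wx rs]])
    have h3: "(a has_integral Ia) {r..s}" unfolding Ia_def by (rule integrable_integral[OF ai])
    have "((\<lambda>t. (K0 + L * \<omega>) * norm (uu' t) + (K0 + L * \<gamma>) * norm (xx' t) + L * a t) has_integral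
        ((K0 + L * \<omega>) * Iu + (K0 + L * \<gamma>) * Ix + L * Ia)) {r..s}"
      by (intro has_integral_add has_integral_mult_right h1 h2 h3)
    then show ?thesis by (simp add: integral_unique)
  qed
  finally show ?thesis .
qed

lemma has_integral_le_ae:
  fixes f g :: "real \<Rightarrow> real"
  assumes f: "(f has_integral i) S" and g: "(g has_integral j) S" and N: "negligible N"
    and le: "\<And>x. x \<in> S - N \<Longrightarrow> f x \<le> g x"
  shows "i \<le> j"
proof -
  have f': "((\<lambda>x. if x \<in> N then 0 else f x) has_integral i) S"
    by (rule has_integral_spike[OF N _ f]) auto
  have g': "((\<lambda>x. if x \<in> N then 0 else g x) has_integral j) S"
    by (rule has_integral_spike[OF N _ g]) auto
  show ?thesis by (rule has_integral_le[OF f' g']) (use le in auto)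
qed

lemma piece_alg:
  fixes \<delta> c C1 m1 \<theta> \<Delta> Es Et \<phi>s \<phi>t I1 J :: real
  assumes d: "0 < \<delta>" "\<delta> < 1" and c: "c > 0" and C1: "C1 \<ge> 0" and th: "\<theta> = (1 - \<delta>) / 4"
    and D: "\<Delta> \<ge> 0" and Es: "Es \<ge> 0" and Et: "Et \<ge> 0" and pt: "\<phi>t \<ge> 0" and ps: "\<phi>s \<le> C1 * (2 * \<Delta> + Es)"
    and I1: "I1 \<le> \<Delta>" and m1: "m1 > 0" and J: "J \<le> \<theta>" "J \<ge> 0"
    and main: "(1 - \<delta>) * (Et - Es) + (\<phi>t - \<phi>s) / c \<le> m1 * I1 + (3 * \<Delta> + 2 * Et) * J"
  shows "Et \<le> ((2 * m1 + 4 * C1 / c) / (1 - \<delta>) + 3 / 2) * \<Delta> + (2 + 2 * C1 / (c * (1 - \<delta>))) * Es"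
proof -
  define k where "k = 1 - \<delta>"
  define X where "X = C1 * (2 * \<Delta> + Es) / c"
  have k: "k > 0" using d by (simp add: k_def)
  have a1: "(\<phi>t - \<phi>s) / c \<ge> - X"
  proof -
    have "-(C1 * (2 * \<Delta> + Es)) \<le> \<phi>t - \<phi>s" using pt ps by linarith
    then have "-(C1 * (2 * \<Delta> + Es)) / c \<le> (\<phi>t - \<phi>s) / c" using c by (intro divide_right_mono) auto
    then show ?thesis unfolding X_def by simp
  qed
  have a2: "m1 * I1 \<le> m1 * \<Delta>" using I1 m1 by (intro mult_left_mono) auto
  have a3: "(3 * \<Delta> + 2 * Et) * J \<le> (3 * \<Delta> + 2 * Et) * \<theta>" using J D Et by (intro mult_left_mono) auto
  have h1: "k * (Et - Es) - X \<le> m1 * \<Delta> + (3 * \<Delta> + 2 * Et) * \<theta>"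
    using main a1 a2 a3 unfolding k_def by linarith
  define p where "p = k * Et"
  define q where "q = k * Es"
  define r where "r = k * \<Delta>"
  have h2: "(3 * \<Delta> + 2 * Et) * \<theta> = 3 * r / 4 + p / 2"
    unfolding th k_def p_def r_def by (simp add: field_simps)
  have h3: "k * (Et - Es) = p - q"
    unfolding p_def q_def by (simp add: right_diff_distrib)
  have "p - q - X \<le> m1 * \<Delta> + (3 * r / 4 + p / 2)"
    using h1 unfolding h2 h3 .
  then have "p \<le> 2 * (q + X + m1 * \<Delta> + 3 * r / 4)" by argo
  then have "k * Et \<le> 2 * (k * Es + X + m1 * \<Delta> + 3 * k * \<Delta> / 4)"
    unfolding p_def q_def r_def by simp
  then have "Et \<le> 2 * (k * Es + X + m1 * \<Delta> + 3 * k * \<Delta> / 4) / k"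
    using k by (simp add: pos_le_divide_eq mult.commute)
  also have "\<dots> = ((2 * m1 + 4 * C1 / c) / (1 - \<delta>) + 3 / 2) * \<Delta> + (2 + 2 * C1 / (c * (1 - \<delta>))) * Es"
    using k c unfolding X_def k_def[symmetric] by (simp add: field_simps)
  finally show ?thesis .
qed

lemma gronwall_pieces:
  fixes E Kf :: "real \<Rightarrow> real"
  assumes cont: "continuous_on {0..T} Kf" and Kf0: "Kf 0 = 0" and th: "\<theta> > 0"
    and A: "A \<ge> 0" and B: "B \<ge> 0" and D: "\<Delta> \<ge> 0" and E0: "E 0 = 0"
    and piece: "\<And>s t. 0 \<le> s \<Longrightarrow> s \<le> t \<Longrightarrow> t \<le> T \<Longrightarrow> Kf t - Kf s \<le> \<theta> \<Longrightarrow> E t \<le> A * \<Delta> + B * E s"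
  shows "\<forall>t\<in>{0..T}. Kf t \<le> real n * \<theta> \<longrightarrow> E t \<le> A * (B + 1) ^ n * \<Delta>"
proof (induction n)
  case 0
  show ?case
  proof (intro ballI impI)
    fix t assume t: "t \<in> {0..T}" and k: "Kf t \<le> real 0 * \<theta>"
    have "E t \<le> A * \<Delta> + B * E 0" by (rule piece) (use t k Kf0 th in auto)
    then show "E t \<le> A * (B + 1) ^ 0 * \<Delta>" using E0 by simp
  qed
next
  case (Suc n)
  have pw: "(B + 1) ^ n \<ge> 1" using B by (intro one_le_power) auto
  have AD: "A * \<Delta> \<ge> 0" using A D by simp
  show ?case
  proof (intro ballI impI)
    fix t assume t: "t \<in> {0..T}" and k: "Kf t \<le> real (Suc n) * \<theta>"
    show "E t \<le> A * (B + 1) ^ Suc n * \<Delta>"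
    proof (cases "Kf t \<le> real n * \<theta>")
      case True
      then have "E t \<le> A * (B + 1) ^ n * \<Delta>" using Suc.IH t by blast
      also have "\<dots> \<le> A * (B + 1) ^ Suc n * \<Delta>"
      proof -
        have "(B + 1) ^ n \<le> (B + 1) ^ Suc n" using B by (intro power_increasing) auto
        then show ?thesis using AD A D by (intro mult_right_mono mult_left_mono) auto
      qed
      finally show ?thesis .
    next
      case False
      have c0t: "continuous_on {0..t} Kf" by (rule continuous_on_subset[OF cont]) (use t in auto)
      obtain s where s: "0 \<le> s" "s \<le> t" "Kf s = real n * \<theta>"
        using IVT'[of Kf 0 "real n * \<theta>" t, OF _ _ _ c0t] Kf0 th False t by auto
      have sT: "s \<in> {0..T}" using s t by auto
      have Es: "E s \<le> A * (B + 1) ^ n * \<Delta>" using Suc.IH sT s(3) by auto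
      have "E t \<le> A * \<Delta> + B * E s" by (rule piece) (use s t k in \<open>auto simp: algebra_simps\<close>)
      also have "\<dots> \<le> A * \<Delta> + B * (A * (B + 1) ^ n * \<Delta>)" using Es B by (intro add_left_mono mult_left_mono) auto
      also have "\<dots> \<le> A * (B + 1) ^ Suc n * \<Delta>"
      proof -
        have "A * \<Delta> \<le> A * \<Delta> * (B + 1) ^ n" using AD pw by (simp add: mult_le_cancel_left1)
        then show ?thesis by (simp add: algebra_simps)
      qed
      finally show ?thesis .
    qed
  qed
qed

definition Kc :: "real \<Rightarrow> real \<Rightarrow> real \<Rightarrow> real \<Rightarrow> real \<Rightarrow> real \<Rightarrow> real \<Rightarrow> real \<Rightarrow> real \<Rightarrow> real \<Rightarrow> real \<Rightarrow> real" where
  "Kc m0 m1 c K0 K1 L \<gamma> \<omega> Ia Ib U =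
    ((2 * m1 + 4 * (K0 + L * (\<omega> + \<gamma>)) / c) / (1 - K1 * \<gamma> / c) + 3 / 2) *
    ((2 + 2 * (K0 + L * (\<omega> + \<gamma>)) / (c * (1 - K1 * \<gamma> / c))) + 1) ^ nat \<lceil>(m0 * (Ia + Ib + U)) / ((1 - K1 * \<gamma> / c) / 4)\<rceil>"

lemma Kc_pos:
  assumes c: "c > 0" and d: "K1 * \<gamma> / c < 1" and pos: "m1 \<ge> 0" "K0 \<ge> 0" "L \<ge> 0" "\<omega> \<ge> 0" "\<gamma> \<ge> 0"
  shows "Kc m0 m1 c K0 K1 L \<gamma> \<omega> Ia Ib U > 0"
proof -
  define Cc where "Cc = K0 + L * (\<omega> + \<gamma>)"
  have Cc: "Cc \<ge> 0" using pos unfolding Cc_def by simp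
  have k: "1 - K1 * \<gamma> / c > 0" using d by simp
  have A: "(2 * m1 + 4 * Cc / c) / (1 - K1 * \<gamma> / c) + 3 / 2 > 0"
  proof -
    have "(2 * m1 + 4 * Cc / c) / (1 - K1 * \<gamma> / c) \<ge> 0" using pos Cc c k by simp
    then show ?thesis by linarith
  qed
  have B: "2 + 2 * Cc / (c * (1 - K1 * \<gamma> / c)) + 1 > 0"
  proof -
    have "2 * Cc / (c * (1 - K1 * \<gamma> / c)) \<ge> 0" using Cc c k by simp
    then show ?thesis by linarith
  qed
  show ?thesis unfolding Kc_def Cc_def[symmetric] using A B by simp
qed

lemma in_Omega_W11: "in_Omega T \<delta> \<omega> K1 c a u u' x0 eta eta' \<Longrightarrow> W11 T eta eta'"
  unfolding in_Omega_def by (elim conjE)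

lemma sweep_sol_init: "sweep_sol G r T u w x0 xi xi' \<Longrightarrow> u 0 - xi 0 = x0"
  unfolding sweep_sol_def by (elim conjE) assumption

lemma lin3_int:
  fixes f g h :: "real \<Rightarrow> real"
  assumes "f integrable_on S" "g integrable_on S" "h integrable_on S"
  shows "(\<lambda>t. \<alpha> * f t + \<beta> * g t + \<kappa> * h t) integrable_on S"
proof -
  have "((\<lambda>t. \<alpha> * f t + \<beta> * g t + \<kappa> * h t) has_integral (\<alpha> * integral S f + \<beta> * integral S g + \<kappa> * integral S h)) S"
    by (intro has_integral_add has_integral_mult_right integrable_integral assms)
  then show ?thesis by blast
qed

lemma main_est:
  fixes G :: "'x::{real_inner,banach} \<Rightarrow> 'w::banach \<Rightarrow> real"
    and Gx :: "'x \<Rightarrow> 'w \<Rightarrow> 'x" and Gw :: "'x \<Rightarrow> 'w \<Rightarrow> 'w \<Rightarrow> real"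
    and g :: "real \<Rightarrow> 'x \<Rightarrow> 'x \<Rightarrow> 'w" and gt :: "real \<Rightarrow> 'x \<Rightarrow> 'x \<Rightarrow> 'w"
    and gu gxi :: "real \<Rightarrow> 'x \<Rightarrow> 'x \<Rightarrow> 'x \<Rightarrow> 'w"
    and a b :: "real \<Rightarrow> real"
    and T lam c L K0 K1 C0 C1 \<gamma> \<omega> Cxi Cu m0 m1 U :: real
    and \<mu>1 :: "'w \<Rightarrow> real \<Rightarrow> real" and \<mu>2 :: "real \<Rightarrow> real"
    and u1 u1' u2 u2' xi1 xi1' xi2 xi2' :: "real \<Rightarrow> 'x" and x01 x02 :: 'x
  assumes T: "0 < T"
    and H: "hyp_H G Gx lam c L \<mu>1 \<mu>2"
    and Lh: "hyp_L G Gx Gw K0 K1 C0 C1"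
    and gh: "hyp_g T g gt gu gxi a b \<gamma> \<omega> Cxi Cu"
    and delta: "K1 * \<gamma> / c < 1"
    and m0: "m0 > 0" and m1: "m1 > 0"
    and key: "\<And>u1 u1' u2 u2' x01 x02 eta1 eta1' eta2 eta2' xi1 xi1' xi2 xi2'.
       W11 T u1 u1' \<Longrightarrow> W11 T u2 u2' \<Longrightarrow>
       x01 \<in> Zset G (g 0 (u1 0) (u1 0 - x01)) \<Longrightarrow>
       x02 \<in> Zset G (g 0 (u2 0) (u2 0 - x02)) \<Longrightarrow>
       in_Omega T (K1 * \<gamma> / c) \<omega> K1 c a u1 u1' x01 eta1 eta1' \<Longrightarrow>
       in_Omega T (K1 * \<gamma> / c) \<omega> K1 c a u2 u2' x02 eta2 eta2' \<Longrightarrow>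
       sweep_sol G (c / lam) T u1 (\<lambda>t. g t (u1 t) (eta1 t)) x01 xi1 xi1' \<Longrightarrow>
       sweep_sol G (c / lam) T u2 (\<lambda>t. g t (u2 t) (eta2 t)) x02 xi2 xi2' \<Longrightarrow>
       ae_on {0..T} (\<lambda>t. \<exists>D.
          ((\<lambda>s. \<bar>G (u1 s - xi1 s) (g s (u1 s) (eta1 s)) - G (u2 s - xi2 s) (g s (u2 s) (eta2 s))\<bar>)
             has_real_derivative D) (at t) \<and>
          norm (xi1' t - xi2' t) + D / c
            \<le> m1 * norm (u1' t - u2' t) + (K1 * \<gamma> / c) * norm (eta1' t - eta2' t)
              + m0 * (a t + b t + norm (u1' t))
                  * (norm (u1 t - u2 t) + norm (xi1 t - xi2 t) + norm (eta1 t - eta2 t)))"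
    and W1: "W11 T u1 u1'" and W2: "W11 T u2 u2'"
    and Z1: "x01 \<in> Zset G (g 0 (u1 0) (u1 0 - x01))"
    and Z2: "x02 \<in> Zset G (g 0 (u2 0) (u2 0 - x02))"
    and O1: "in_Omega T (K1 * \<gamma> / c) \<omega> K1 c a u1 u1' x01 xi1 xi1'"
    and O2: "in_Omega T (K1 * \<gamma> / c) \<omega> K1 c a u2 u2' x02 xi2 xi2'"
    and S1: "sweep_sol G (c / lam) T u1 (\<lambda>t. g t (u1 t) (xi1 t)) x01 xi1 xi1'"
    and S2: "sweep_sol G (c / lam) T u2 (\<lambda>t. g t (u2 t) (xi2 t)) x02 xi2 xi2'"
    and U: "integral {0..T} (\<lambda>t. norm (u1' t)) \<le> U"
  shows "integral {0..T} (\<lambda>t. norm (xi1' t - xi2' t))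
    \<le> Kc m0 m1 c K0 K1 L \<gamma> \<omega> (integral {0..T} (\<lambda>t. \<bar>a t\<bar>)) (integral {0..T} (\<lambda>t. \<bar>b t\<bar>)) U
       * (norm (x01 - x02) + norm (u1 0 - u2 0) + integral {0..T} (\<lambda>t. norm (u1' t - u2' t)))"
proof -
  have c: "c > 0" by (rule hyp_H_c[OF H])
  have Lp: "L > 0" by (rule hyp_H_L[OF H])
  have K0: "K0 > 0" by (rule hyp_L_K0pos[OF Lh])
  have K1: "K1 > 0" by (rule hyp_L_K1pos[OF Lh])
  have gam: "\<gamma> > 0" by (rule hyp_g_gam[OF gh])
  have om: "\<omega> > 0" by (rule hyp_g_om[OF gh])
  define \<delta> where "\<delta> = K1 * \<gamma> / c"
  have d0: "0 < \<delta>" unfolding \<delta>_def using K1 gam c by simp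
  have d1: "\<delta> < 1" unfolding \<delta>_def using delta .
  define Cc where "Cc = K0 + L * (\<omega> + \<gamma>)"
  have Cc0: "Cc \<ge> 0" unfolding Cc_def using K0 Lp om gam by simp
  define \<theta> where "\<theta> = (1 - \<delta>) / 4"
  have th0: "\<theta> > 0" unfolding \<theta>_def using d1 by simp
  define A where "A = (2 * m1 + 4 * Cc / c) / (1 - \<delta>) + 3 / 2"
  define B where "B = 2 + 2 * Cc / (c * (1 - \<delta>))"
  have A0: "A \<ge> 0"
  proof -
    have "(2 * m1 + 4 * Cc / c) / (1 - \<delta>) \<ge> 0" using m1 Cc0 c d1 by simp
    then show ?thesis unfolding A_def by linarith
  qed
  have B0: "B \<ge> 0"
  proof -
    have "2 * Cc / (c * (1 - \<delta>)) \<ge> 0" using Cc0 c d1 by simp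
    then show ?thesis unfolding B_def by linarith
  qed
  define Ia where "Ia = integral {0..T} (\<lambda>t. \<bar>a t\<bar>)"
  define Ib where "Ib = integral {0..T} (\<lambda>t. \<bar>b t\<bar>)"
  define Mb where "Mb = m0 * (Ia + Ib + U)"
  define n where "n = nat \<lceil>Mb / \<theta>\<rceil>"
  have Kc_eq: "Kc m0 m1 c K0 K1 L \<gamma> \<omega> Ia Ib U = A * (B + 1) ^ n"
    unfolding Kc_def A_def B_def n_def Mb_def \<theta>_def \<delta>_def Cc_def by simp

  have Wx1: "W11 T xi1 xi1'" by (rule in_Omega_W11[OF O1])
  have Wx2: "W11 T xi2 xi2'" by (rule in_Omega_W11[OF O2])
  have x1_0: "u1 0 - xi1 0 = x01" by (rule sweep_sol_init[OF S1])
  have x2_0: "u2 0 - xi2 0 = x02" by (rule sweep_sol_init[OF S2])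

  define nd where "nd = (\<lambda>t. norm (xi1' t - xi2' t))"
  define du where "du = (\<lambda>t. norm (u1' t - u2' t))"
  define E where "E = (\<lambda>t. integral {0..t} nd)"
  define \<Delta> where "\<Delta> = norm (x01 - x02) + norm (u1 0 - u2 0) + integral {0..T} du"
  have ndi: "nd integrable_on {0..T}" unfolding nd_def by (rule W11_diff_norm_int[OF T Wx1 Wx2])
  have dui: "du integrable_on {0..T}" unfolding du_def by (rule W11_diff_norm_int[OF T W1 W2])
  have nd0: "nd t \<ge> 0" for t unfolding nd_def by simp
  have du0: "du t \<ge> 0" for t unfolding du_def by simp
  have ndsub: "nd integrable_on {r..s}" if "0 \<le> r" "s \<le> T" for r s
    by (rule integrable_on_subinterval[OF ndi]) (use that in auto)
  have dusub: "du integrable_on {r..s}" if "0 \<le> r" "s \<le> T" for r s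
    by (rule integrable_on_subinterval[OF dui]) (use that in auto)
  have Ediff: "E t - E s = integral {s..t} nd" if "0 \<le> s" "s \<le> t" "t \<le> T" for s t
  proof -
    have "integral {0..s} nd + integral {s..t} nd = integral {0..t} nd"
      by (rule Henstock_Kurzweil_Integration.integral_combine[OF that(1,2) ndsub]) (use that in auto)
    then show ?thesis unfolding E_def by simp
  qed
  have Emono: "E s \<le> E t" if "0 \<le> s" "s \<le> t" "t \<le> T" for s t
  proof -
    have "integral {s..t} nd \<ge> 0" by (rule integral_nonneg[OF ndsub]) (use that nd0 in auto)
    then show ?thesis using Ediff[OF that] by simp
  qed
  have E0: "E 0 = 0" unfolding E_def by simp
  have Enn: "E t \<ge> 0" if "0 \<le> t" "t \<le> T" for t using Emono[of 0 t] that E0 by simp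
  have intdu0: "integral {0..T} du \<ge> 0" by (rule integral_nonneg[OF dui]) (use du0 in auto)
  have intdu_le: "integral {r..s} du \<le> integral {0..T} du" if "0 \<le> r" "r \<le> s" "s \<le> T" for r s
    by (rule integral_subset_le) (use that dusub dui du0 in auto)
  have D0: "\<Delta> \<ge> 0" unfolding \<Delta>_def using intdu0 by simp
  have F1: "norm (u1 t - u2 t) \<le> \<Delta>" if t: "t \<in> {0..T}" for t
  proof -
    have "norm ((u1 t - u2 t) - (u1 0 - u2 0)) \<le> integral {0..t} du"
      unfolding du_def by (rule W11_pair_norm[OF T W1 W2]) (use t in auto)
    also have "\<dots> \<le> integral {0..T} du" by (rule intdu_le) (use t in auto)
    finally have "norm ((u1 t - u2 t) - (u1 0 - u2 0)) \<le> integral {0..T} du" .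
    moreover have "norm (u1 t - u2 t) \<le> norm (u1 0 - u2 0) + norm ((u1 t - u2 t) - (u1 0 - u2 0))"
      by (rule norm_triangle_sub)
    ultimately show ?thesis unfolding \<Delta>_def using norm_ge_zero[of "x01 - x02"] by linarith
  qed
  have F2: "norm (xi1 t - xi2 t) \<le> \<Delta> + E t" if t: "t \<in> {0..T}" for t
  proof -
    have "norm ((xi1 t - xi2 t) - (xi1 0 - xi2 0)) \<le> E t"
      unfolding E_def nd_def by (rule W11_pair_norm[OF T Wx1 Wx2]) (use t in auto)
    moreover have "xi1 0 - xi2 0 = (u1 0 - u2 0) - (x01 - x02)" using x1_0 x2_0 by (simp add: algebra_simps)
    moreover have "norm ((u1 0 - u2 0) - (x01 - x02)) \<le> norm (u1 0 - u2 0) + norm (x01 - x02)"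
      by (rule norm_triangle_ineq4)
    moreover have "norm (xi1 t - xi2 t) \<le> norm (xi1 0 - xi2 0) + norm ((xi1 t - xi2 t) - (xi1 0 - xi2 0))"
      by (rule norm_triangle_sub)
    ultimately have "norm (xi1 t - xi2 t) \<le> norm (u1 0 - u2 0) + norm (x01 - x02) + E t" by simp
    then show ?thesis unfolding \<Delta>_def using intdu0 by linarith
  qed
  define \<phi> where "\<phi> = (\<lambda>s. \<bar>G (u1 s - xi1 s) (g s (u1 s) (xi1 s)) - G (u2 s - xi2 s) (g s (u2 s) (xi2 s))\<bar>)"
  have F4: "\<phi> s \<le> Cc * (2 * \<Delta> + E s)" if s: "s \<in> {0..T}" for s
  proof -
    define Y where "Y = 2 * \<Delta> + E s"
    have nu: "norm (u1 s - u2 s) \<le> \<Delta>" by (rule F1[OF s])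
    have nx: "norm (xi1 s - xi2 s) \<le> \<Delta> + E s" by (rule F2[OF s])
    have Es0: "E s \<ge> 0" using Enn s by auto
    have nxx: "norm ((u1 s - xi1 s) - (u2 s - xi2 s)) \<le> Y"
    proof -
      have "norm ((u1 s - xi1 s) - (u2 s - xi2 s)) = norm ((u1 s - u2 s) - (xi1 s - xi2 s))" by (simp add: algebra_simps)
      also have "\<dots> \<le> norm (u1 s - u2 s) + norm (xi1 s - xi2 s)" by (rule norm_triangle_ineq4)
      finally show ?thesis unfolding Y_def using nu nx by linarith
    qed
    have ng: "norm (g s (u1 s) (xi1 s) - g s (u2 s) (xi2 s)) \<le> \<omega> * Y + \<gamma> * Y"
    proof -
      have "norm (g s (u1 s) (xi1 s) - g s (u2 s) (xi2 s)) \<le> \<omega> * norm (u1 s - u2 s) + \<gamma> * norm (xi1 s - xi2 s)"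
        by (rule g_lip[OF T gh s])
      also have "\<dots> \<le> \<omega> * Y + \<gamma> * Y"
        using nu nx Es0 D0 om gam unfolding Y_def by (intro add_mono mult_left_mono) auto
      finally show ?thesis .
    qed
    have "\<phi> s \<le> K0 * norm ((u1 s - xi1 s) - (u2 s - xi2 s)) + L * norm (g s (u1 s) (xi1 s) - g s (u2 s) (xi2 s))"
      unfolding \<phi>_def by (rule G_lip[OF H Lh])
    also have "\<dots> \<le> K0 * Y + L * (\<omega> * Y + \<gamma> * Y)"
      using nxx ng K0 Lp by (intro add_mono mult_left_mono) auto
    also have "\<dots> = Cc * (2 * \<Delta> + E s)" unfolding Cc_def Y_def by (simp add: algebra_simps)
    finally show ?thesis .
  qed
  define hh where "hh = (\<lambda>t. ((K0 + L * \<omega>) * norm (u1' t) + (K0 + L * \<gamma>) * norm (xi1' t) + L * a t)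
      + ((K0 + L * \<omega>) * norm (u2' t) + (K0 + L * \<gamma>) * norm (xi2' t) + L * a t))"
  have a0: "a integrable_on {0..T}"
    using hyp_g_a[OF gh] unfolding absolutely_integrable_on_def by (elim conjE)
  have hi1: "(\<lambda>t. (K0 + L * \<omega>) * norm (uu' t) + (K0 + L * \<gamma>) * norm (xx' t) + L * a t) integrable_on {r..s}"
    if "W11 T uu uu'" "W11 T xx xx'" "0 \<le> r" "r \<le> s" "s \<le> T" for uu uu' xx xx' :: "real \<Rightarrow> 'x" and r s
    by (rule lin3_int[OF W11_int(2)[OF that(1,3-5)] W11_int(2)[OF that(2,3-5)] integrable_on_subinterval[OF a0]]) (use that in auto)
  have hhi: "hh integrable_on {r..s}" if "0 \<le> r" "r \<le> s" "s \<le> T" for r s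
    unfolding hh_def by (intro integrable_add hi1[OF W1 Wx1 that] hi1[OF W2 Wx2 that])
  have F5: "\<bar>\<phi> s - \<phi> r\<bar> \<le> integral {r..s} hh" if rs: "0 \<le> r" "r \<le> s" "s \<le> T" for r s
  proof -
    have p1: "\<bar>G (u1 s - xi1 s) (g s (u1 s) (xi1 s)) - G (u1 r - xi1 r) (g r (u1 r) (xi1 r))\<bar>
      \<le> integral {r..s} (\<lambda>t. (K0 + L * \<omega>) * norm (u1' t) + (K0 + L * \<gamma>) * norm (xi1' t) + L * a t)"
      by (rule Psi_ctrl[OF T H Lh gh W1 Wx1 rs])
    have p2: "\<bar>G (u2 s - xi2 s) (g s (u2 s) (xi2 s)) - G (u2 r - xi2 r) (g r (u2 r) (xi2 r))\<bar>
      \<le> integral {r..s} (\<lambda>t. (K0 + L * \<omega>) * norm (u2' t) + (K0 + L * \<gamma>) * norm (xi2' t) + L * a t)"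
      by (rule Psi_ctrl[OF T H Lh gh W2 Wx2 rs])
    have e: "integral {r..s} hh = integral {r..s} (\<lambda>t. (K0 + L * \<omega>) * norm (u1' t) + (K0 + L * \<gamma>) * norm (xi1' t) + L * a t)
        + integral {r..s} (\<lambda>t. (K0 + L * \<omega>) * norm (u2' t) + (K0 + L * \<gamma>) * norm (xi2' t) + L * a t)"
      unfolding hh_def by (rule integral_add[OF hi1[OF W1 Wx1 rs] hi1[OF W2 Wx2 rs]])
    have abs_ineq: "\<bar>\<bar>p - q\<bar> - \<bar>p' - q'\<bar>\<bar> \<le> \<bar>p - p'\<bar> + \<bar>q - q'\<bar>" for p q p' q' :: real
      by linarith
    show ?thesis unfolding \<phi>_def e using abs_ineq p1 p2 by (smt (verit))
  qed
  have keyI: "ae_on {0..T} (\<lambda>t. \<exists>D. (\<phi> has_real_derivative D) (at t) \<and>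
      nd t + D / c \<le> m1 * du t + \<delta> * nd t + m0 * (a t + b t + norm (u1' t))
                  * (norm (u1 t - u2 t) + norm (xi1 t - xi2 t) + norm (xi1 t - xi2 t)))"
    using key[OF W1 W2 Z1 Z2 O1 O2 S1 S2] unfolding \<phi>_def nd_def du_def \<delta>_def .
  obtain N0 where N0: "negligible N0"
    and N0P: "\<And>t. t \<in> {0..T} - N0 \<Longrightarrow> \<exists>D. (\<phi> has_real_derivative D) (at t) \<and>
      nd t + D / c \<le> m1 * du t + \<delta> * nd t + m0 * (a t + b t + norm (u1' t))
                  * (norm (u1 t - u2 t) + norm (xi1 t - xi2 t) + norm (xi1 t - xi2 t))"
    using keyI unfolding ae_on_def by blast
  define Df where "Df = (\<lambda>t. SOME D. (\<phi> has_real_derivative D) (at t) \<and>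
      nd t + D / c \<le> m1 * du t + \<delta> * nd t + m0 * (a t + b t + norm (u1' t))
                  * (norm (u1 t - u2 t) + norm (xi1 t - xi2 t) + norm (xi1 t - xi2 t)))"
  have DfP: "(\<phi> has_real_derivative Df t) (at t) \<and>
      nd t + Df t / c \<le> m1 * du t + \<delta> * nd t + m0 * (a t + b t + norm (u1' t))
                  * (norm (u1 t - u2 t) + norm (xi1 t - xi2 t) + norm (xi1 t - xi2 t))"
    if "t \<in> {0..T} - N0" for t
    unfolding Df_def by (rule someI_ex[OF N0P[OF that]])
  have F6: "(Df has_integral (\<phi> t - \<phi> s)) {s..t}" if st: "0 \<le> s" "s \<le> t" "t \<le> T" for s t
  proof -
    have "((\<lambda>x. if x \<in> N0 then 0 else Df x) has_integral (\<phi> t - \<phi> s)) {s..t}"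
    proof (rule ftc_ae_ctrl[OF st(2) hhi[OF st] N0])
      show "(\<phi> has_real_derivative Df x) (at x within {s..t})" if "x \<in> {s..t} - N0" for x
        using DfP[of x] that st by (auto intro: has_field_derivative_at_within)
      show "\<bar>\<phi> v - \<phi> u\<bar> \<le> integral {u..v} hh" if "s \<le> u" "u \<le> v" "v \<le> t" for u v
        by (rule F5) (use that st in auto)
    qed
    then show ?thesis by (rule has_integral_spike[OF N0, rotated]) auto
  qed
  define bt where "bt = (\<lambda>t. m0 * (\<bar>a t\<bar> + \<bar>b t\<bar> + norm (u1' t)))"
  have aabs: "(\<lambda>t. \<bar>a t\<bar>) integrable_on {0..T}"
    using hyp_g_a[OF gh] unfolding absolutely_integrable_on_def by simp
  have babs: "(\<lambda>t. \<bar>b t\<bar>) integrable_on {0..T}"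
    using hyp_g_b[OF gh] unfolding absolutely_integrable_on_def by simp
  have u1n: "(\<lambda>t. norm (u1' t)) integrable_on {0..T}" by (rule W11_nintg[OF W1])
  have bt_has: "(bt has_integral m0 * (Ia + Ib + integral {0..T} (\<lambda>t. norm (u1' t)))) {0..T}"
    unfolding bt_def Ia_def Ib_def
    by (intro has_integral_mult_right has_integral_add integrable_integral aabs babs u1n)
  have bti: "bt integrable_on {0..T}" using bt_has by blast
  have bt0: "bt t \<ge> 0" for t unfolding bt_def using m0 by simp
  define Kf where "Kf = (\<lambda>t. integral {0..t} bt)"
  have Kf_cont: "continuous_on {0..T} Kf" unfolding Kf_def by (rule indefinite_integral_continuous_1[OF bti])
  have Kf0: "Kf 0 = 0" unfolding Kf_def by simp
  have btsub: "bt integrable_on {r..s}" if "0 \<le> r" "s \<le> T" for r s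
    by (rule integrable_on_subinterval[OF bti]) (use that in auto)
  have Kfdiff: "Kf t - Kf s = integral {s..t} bt" if "0 \<le> s" "s \<le> t" "t \<le> T" for s t
  proof -
    have "integral {0..s} bt + integral {s..t} bt = integral {0..t} bt"
      by (rule Henstock_Kurzweil_Integration.integral_combine[OF that(1,2) btsub]) (use that in auto)
    then show ?thesis unfolding Kf_def by simp
  qed
  have KfT: "Kf T \<le> Mb"
  proof -
    have "Kf T = m0 * (Ia + Ib + integral {0..T} (\<lambda>t. norm (u1' t)))" unfolding Kf_def using bt_has by (simp add: integral_unique)
    also have "\<dots> \<le> m0 * (Ia + Ib + U)" using U m0 by (intro mult_left_mono) auto
    finally show ?thesis unfolding Mb_def .
  qed
  have F7: "(1 - \<delta>) * (E t - E s) + (\<phi> t - \<phi> s) / c \<le> m1 * integral {s..t} du + (3 * \<Delta> + 2 * E t) * (Kf t - Kf s)"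
    if st: "0 \<le> s" "s \<le> t" "t \<le> T" for s t
  proof (rule has_integral_le_ae[OF _ _ N0])
    have ndh: "(nd has_integral (E t - E s)) {s..t}" unfolding Ediff[OF st] by (rule integrable_integral[OF ndsub]) (use st in auto)
    show "((\<lambda>r. (1 - \<delta>) * nd r + Df r / c) has_integral ((1 - \<delta>) * (E t - E s) + (\<phi> t - \<phi> s) / c)) {s..t}"
      by (intro has_integral_add has_integral_mult_right has_integral_divide ndh F6[OF st])
    have duh: "(du has_integral integral {s..t} du) {s..t}" by (rule integrable_integral[OF dusub]) (use st in auto)
    have bth: "(bt has_integral (Kf t - Kf s)) {s..t}" unfolding Kfdiff[OF st] by (rule integrable_integral[OF btsub]) (use st in auto)
    show "((\<lambda>r. m1 * du r + (3 * \<Delta> + 2 * E t) * bt r) has_integral (m1 * integral {s..t} du + (3 * \<Delta> + 2 * E t) * (Kf t - Kf s))) {s..t}"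
      by (intro has_integral_add has_integral_mult_right duh bth)
    show "(1 - \<delta>) * nd r + Df r / c \<le> m1 * du r + (3 * \<Delta> + 2 * E t) * bt r" if r: "r \<in> {s..t} - N0" for r
    proof -
      have rT: "r \<in> {0..T} - N0" using r st by auto
      have rT': "r \<in> {0..T}" using rT by blast
      have ineq: "nd r + Df r / c \<le> m1 * du r + \<delta> * nd r + m0 * (a r + b r + norm (u1' r))
                  * (norm (u1 r - u2 r) + norm (xi1 r - xi2 r) + norm (xi1 r - xi2 r))"
        using DfP[OF rT] by blast
      define X where "X = norm (u1 r - u2 r) + norm (xi1 r - xi2 r) + norm (xi1 r - xi2 r)"
      have X0: "X \<ge> 0" unfolding X_def by simp
      have Er: "E r \<le> E t" by (rule Emono) (use r st in auto)
      have Xle: "X \<le> 3 * \<Delta> + 2 * E t" unfolding X_def using F1[OF rT'] F2[OF rT'] Er by linarith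
      have b1: "m0 * (a r + b r + norm (u1' r)) \<le> bt r" unfolding bt_def using m0
        by (intro mult_left_mono) auto
      have "m0 * (a r + b r + norm (u1' r)) * X \<le> bt r * X" using b1 X0 by (rule mult_right_mono)
      also have "\<dots> \<le> bt r * (3 * \<Delta> + 2 * E t)" using Xle bt0[of r] by (rule mult_left_mono)
      finally have "m0 * (a r + b r + norm (u1' r)) * X \<le> (3 * \<Delta> + 2 * E t) * bt r" by (simp add: mult.commute)
      then show ?thesis using ineq unfolding X_def by (simp add: algebra_simps)
    qed
  qed
  have F8: "E t \<le> A * \<Delta> + B * E s" if st: "0 \<le> s" "s \<le> t" "t \<le> T" and K: "Kf t - Kf s \<le> \<theta>" for s t
  proof -
    have J0: "Kf t - Kf s \<ge> 0" unfolding Kfdiff[OF st] by (rule integral_nonneg[OF btsub]) (use st bt0 in auto)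
    have I1: "integral {s..t} du \<le> \<Delta>" using intdu_le[OF st] norm_ge_zero[of "x01 - x02"] norm_ge_zero[of "u1 0 - u2 0"] unfolding \<Delta>_def by linarith
    have "E t \<le> ((2 * m1 + 4 * Cc / c) / (1 - \<delta>) + 3 / 2) * \<Delta> + (2 + 2 * Cc / (c * (1 - \<delta>))) * E s"
    proof (rule piece_alg[OF d0 d1 c Cc0 \<theta>_def D0 _ _ _ _ I1 m1 K J0 F7[OF st]])
      show "E s \<ge> 0" by (rule Enn) (use st in auto)
      show "E t \<ge> 0" by (rule Enn) (use st in auto)
      show "\<phi> t \<ge> 0" unfolding \<phi>_def by simp
      show "\<phi> s \<le> Cc * (2 * \<Delta> + E s)" by (rule F4) (use st in auto)
    qed
    then show ?thesis unfolding A_def B_def .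
  qed
  have F9: "\<forall>t\<in>{0..T}. Kf t \<le> real n * \<theta> \<longrightarrow> E t \<le> A * (B + 1) ^ n * \<Delta>"
    by (rule gronwall_pieces[where E=E and Kf=Kf, OF Kf_cont Kf0 th0 A0 B0 D0 E0 F8])
  have "Mb / \<theta> \<le> real n" unfolding n_def by (rule real_nat_ceiling_ge)
  then have "Mb \<le> real n * \<theta>" using th0 by (simp add: pos_divide_le_eq)
  then have "Kf T \<le> real n * \<theta>" using KfT by linarith
  then have "E T \<le> A * (B + 1) ^ n * \<Delta>" using F9 T by auto
  then show ?thesis unfolding Kc_eq[unfolded Ia_def Ib_def] E_def nd_def \<Delta>_def du_def by simp
qed

theorem corollary4p5:
  fixes G :: "'x::{real_inner,banach} \<Rightarrow> 'w::banach \<Rightarrow> real"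
    and Gx :: "'x \<Rightarrow> 'w \<Rightarrow> 'x" and Gw :: "'x \<Rightarrow> 'w \<Rightarrow> 'w \<Rightarrow> real"
    and g :: "real \<Rightarrow> 'x \<Rightarrow> 'x \<Rightarrow> 'w" and gt :: "real \<Rightarrow> 'x \<Rightarrow> 'x \<Rightarrow> 'w"
    and gu gxi :: "real \<Rightarrow> 'x \<Rightarrow> 'x \<Rightarrow> 'x \<Rightarrow> 'w"
    and a b :: "real \<Rightarrow> real"
    and T lam c L K0 K1 C0 C1 \<gamma> \<omega> Cxi Cu m0 m1 :: real
    and \<mu>1 :: "'w \<Rightarrow> real \<Rightarrow> real" and \<mu>2 :: "real \<Rightarrow> real"
  assumes T: "0 < T"
    and H: "hyp_H G Gx lam c L \<mu>1 \<mu>2"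
    and Lh: "hyp_L G Gx Gw K0 K1 C0 C1"
    and gh: "hyp_g T g gt gu gxi a b \<gamma> \<omega> Cxi Cu"
    and delta: "K1 * \<gamma> / c < 1"
    and m0: "m0 > 0" and m1: "m1 > 0"
    and key: "\<And>u1 u1' u2 u2' x01 x02 eta1 eta1' eta2 eta2' xi1 xi1' xi2 xi2'.
       W11 T u1 u1' \<Longrightarrow> W11 T u2 u2' \<Longrightarrow>
       x01 \<in> Zset G (g 0 (u1 0) (u1 0 - x01)) \<Longrightarrow>
       x02 \<in> Zset G (g 0 (u2 0) (u2 0 - x02)) \<Longrightarrow>
       in_Omega T (K1 * \<gamma> / c) \<omega> K1 c a u1 u1' x01 eta1 eta1' \<Longrightarrow>
       in_Omega T (K1 * \<gamma> / c) \<omega> K1 c a u2 u2' x02 eta2 eta2' \<Longrightarrow>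
       sweep_sol G (c / lam) T u1 (\<lambda>t. g t (u1 t) (eta1 t)) x01 xi1 xi1' \<Longrightarrow>
       sweep_sol G (c / lam) T u2 (\<lambda>t. g t (u2 t) (eta2 t)) x02 xi2 xi2' \<Longrightarrow>
       ae_on {0..T} (\<lambda>t. \<exists>D.
          ((\<lambda>s. \<bar>G (u1 s - xi1 s) (g s (u1 s) (eta1 s)) - G (u2 s - xi2 s) (g s (u2 s) (eta2 s))\<bar>)
             has_real_derivative D) (at t) \<and>
          norm (xi1' t - xi2' t) + D / c
            \<le> m1 * norm (u1' t - u2' t) + (K1 * \<gamma> / c) * norm (eta1' t - eta2' t)
              + m0 * (a t + b t + norm (u1' t))
                  * (norm (u1 t - u2 t) + norm (xi1 t - xi2 t) + norm (eta1 t - eta2 t)))"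
  shows "\<forall>R > 2 * m0 * integral {0..T} (\<lambda>t. a t + b t). \<exists>K > 0.
     \<forall>u1 u1' u2 u2' x01 x02 xi1 xi1' xi2 xi2'.
       W11 T u1 u1' \<and> W11 T u2 u2' \<and>
       integral {0..T} (\<lambda>t. norm (u1' t)) \<le> R / (2 * m0) - integral {0..T} (\<lambda>t. a t + b t) \<and>
       x01 \<in> Zset G (g 0 (u1 0) (u1 0 - x01)) \<and>
       x02 \<in> Zset G (g 0 (u2 0) (u2 0 - x02)) \<and>
       in_Omega T (K1 * \<gamma> / c) \<omega> K1 c a u1 u1' x01 xi1 xi1' \<and>
       in_Omega T (K1 * \<gamma> / c) \<omega> K1 c a u2 u2' x02 xi2 xi2' \<and>
       sweep_sol G (c / lam) T u1 (\<lambda>t. g t (u1 t) (xi1 t)) x01 xi1 xi1' \<and>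
       sweep_sol G (c / lam) T u2 (\<lambda>t. g t (u2 t) (xi2 t)) x02 xi2 xi2'
       \<longrightarrow> integral {0..T} (\<lambda>t. norm (xi1' t - xi2' t))
            \<le> K * (norm (x01 - x02) + norm (u1 0 - u2 0) + integral {0..T} (\<lambda>t. norm (u1' t - u2' t)))"
proof (intro allI impI)
  fix R assume R: "R > 2 * m0 * integral {0..T} (\<lambda>t. a t + b t)"
  define K where "K = Kc m0 m1 c K0 K1 L \<gamma> \<omega> (integral {0..T} (\<lambda>t. \<bar>a t\<bar>)) (integral {0..T} (\<lambda>t. \<bar>b t\<bar>))
      (R / (2 * m0) - integral {0..T} (\<lambda>t. a t + b t))"
  have Kpos: "K > 0" unfolding K_def
  proof (rule Kc_pos[OF hyp_H_c[OF H] delta])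
    show "m1 \<ge> 0" using m1 by simp
    show "K0 \<ge> 0" using hyp_L_K0pos[OF Lh] by simp
    show "L \<ge> 0" using hyp_H_L[OF H] by simp
    show "\<omega> \<ge> 0" using hyp_g_om[OF gh] by simp
    show "\<gamma> \<ge> 0" using hyp_g_gam[OF gh] by simp
  qed
  have main: "\<forall>u1 u1' u2 u2' x01 x02 xi1 xi1' xi2 xi2'.
       W11 T u1 u1' \<and> W11 T u2 u2' \<and>
       integral {0..T} (\<lambda>t. norm (u1' t)) \<le> R / (2 * m0) - integral {0..T} (\<lambda>t. a t + b t) \<and>
       x01 \<in> Zset G (g 0 (u1 0) (u1 0 - x01)) \<and>
       x02 \<in> Zset G (g 0 (u2 0) (u2 0 - x02)) \<and>
       in_Omega T (K1 * \<gamma> / c) \<omega> K1 c a u1 u1' x01 xi1 xi1' \<and>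
       in_Omega T (K1 * \<gamma> / c) \<omega> K1 c a u2 u2' x02 xi2 xi2' \<and>
       sweep_sol G (c / lam) T u1 (\<lambda>t. g t (u1 t) (xi1 t)) x01 xi1 xi1' \<and>
       sweep_sol G (c / lam) T u2 (\<lambda>t. g t (u2 t) (xi2 t)) x02 xi2 xi2'
       \<longrightarrow> integral {0..T} (\<lambda>t. norm (xi1' t - xi2' t))
            \<le> K * (norm (x01 - x02) + norm (u1 0 - u2 0) + integral {0..T} (\<lambda>t. norm (u1' t - u2' t)))"
  proof (intro allI impI)
    fix u1 u1' u2 u2' x01 x02 xi1 xi1' xi2 xi2'
    assume A: "W11 T u1 u1' \<and> W11 T u2 u2' \<and>
       integral {0..T} (\<lambda>t. norm (u1' t)) \<le> R / (2 * m0) - integral {0..T} (\<lambda>t. a t + b t) \<and>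
       x01 \<in> Zset G (g 0 (u1 0) (u1 0 - x01)) \<and>
       x02 \<in> Zset G (g 0 (u2 0) (u2 0 - x02)) \<and>
       in_Omega T (K1 * \<gamma> / c) \<omega> K1 c a u1 u1' x01 xi1 xi1' \<and>
       in_Omega T (K1 * \<gamma> / c) \<omega> K1 c a u2 u2' x02 xi2 xi2' \<and>
       sweep_sol G (c / lam) T u1 (\<lambda>t. g t (u1 t) (xi1 t)) x01 xi1 xi1' \<and>
       sweep_sol G (c / lam) T u2 (\<lambda>t. g t (u2 t) (xi2 t)) x02 xi2 xi2'"
    from A have W1: "W11 T u1 u1'" by (elim conjE)
    from A have W2: "W11 T u2 u2'" by (elim conjE)
    from A have U: "integral {0..T} (\<lambda>t. norm (u1' t)) \<le> R / (2 * m0) - integral {0..T} (\<lambda>t. a t + b t)" by (elim conjE)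
    from A have Z1: "x01 \<in> Zset G (g 0 (u1 0) (u1 0 - x01))" by (elim conjE)
    from A have Z2: "x02 \<in> Zset G (g 0 (u2 0) (u2 0 - x02))" by (elim conjE)
    from A have O1: "in_Omega T (K1 * \<gamma> / c) \<omega> K1 c a u1 u1' x01 xi1 xi1'" by (elim conjE)
    from A have O2: "in_Omega T (K1 * \<gamma> / c) \<omega> K1 c a u2 u2' x02 xi2 xi2'" by (elim conjE)
    from A have S1: "sweep_sol G (c / lam) T u1 (\<lambda>t. g t (u1 t) (xi1 t)) x01 xi1 xi1'" by (elim conjE)
    from A have S2: "sweep_sol G (c / lam) T u2 (\<lambda>t. g t (u2 t) (xi2 t)) x02 xi2 xi2'" by (elim conjE)
    show "integral {0..T} (\<lambda>t. norm (xi1' t - xi2' t))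
            \<le> K * (norm (x01 - x02) + norm (u1 0 - u2 0) + integral {0..T} (\<lambda>t. norm (u1' t - u2' t)))"
      unfolding K_def by (rule main_est[OF T H Lh gh delta m0 m1 key W1 W2 Z1 Z2 O1 O2 S1 S2 U])
  qed
  show "\<exists>K>0. \<forall>u1 u1' u2 u2' x01 x02 xi1 xi1' xi2 xi2'.
       W11 T u1 u1' \<and> W11 T u2 u2' \<and>
       integral {0..T} (\<lambda>t. norm (u1' t)) \<le> R / (2 * m0) - integral {0..T} (\<lambda>t. a t + b t) \<and>
       x01 \<in> Zset G (g 0 (u1 0) (u1 0 - x01)) \<and>
       x02 \<in> Zset G (g 0 (u2 0) (u2 0 - x02)) \<and>
       in_Omega T (K1 * \<gamma> / c) \<omega> K1 c a u1 u1' x01 xi1 xi1' \<and>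
       in_Omega T (K1 * \<gamma> / c) \<omega> K1 c a u2 u2' x02 xi2 xi2' \<and>
       sweep_sol G (c / lam) T u1 (\<lambda>t. g t (u1 t) (xi1 t)) x01 xi1 xi1' \<and>
       sweep_sol G (c / lam) T u2 (\<lambda>t. g t (u2 t) (xi2 t)) x02 xi2 xi2'
       \<longrightarrow> integral {0..T} (\<lambda>t. norm (xi1' t - xi2' t))
            \<le> K * (norm (x01 - x02) + norm (u1 0 - u2 0) + integral {0..T} (\<lambda>t. norm (u1' t - u2' t)))"
    using Kpos main by blast
qed

end
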